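(* Let $X>0$, $n\ge1$, let $a_0,a_1$ be $X$-periodic $\mathbb{C}^{n\times n}$-valued functions in $H^1_{\rm per}([0,X])$, and for $\sigma\in[0,2\pi)$ let $A_1=a_1+2i\sigma I$, $A_0=a_0-\sigma^2I+i\sigma a_1$, $K(\sigma,\lambda)=\partial_x(\partial_x^2-1)^{-1}A_1+(\partial_x^2-1)^{-1}(A_0+(1-\lambda)I)$ on $L^2_{\rm per}([0,X];\mathbb{C}^n)$. Let $D_\sigma(\lambda)={\det}_2(I+K(\sigma,\lambda))$ and $D_{\sigma,J}(\lambda)={\det}_2(I+P_JK(\sigma,\lambda)P_J|_{\mathcal{H}_J})$, where $P_J$ is the orthogonal projection onto $\mathcal{H}_J=\operatorname{span}\{e^{2\pi ikx/X}v:|k|\le J, v\in\mathbb{C}^n\}$. Then for each $R>0$ there exists $C=C(R)>0$ such that $|D_{\sigma,J}(\lambda)-D_\sigma(\lambda)|\le CJ^{-1/2}$ for all $J\in\mathbb{N}$, all $|\lambda|\le R$ and all $\sigma\in[0,2\pi)$.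
   Context: The multipliers act diagonally on Fourier modes. ${\det}_2$ is the 2-modified Fredholm determinant: ${\det}_2(I-A)=\det(I-A)e^{\operatorname{tr}A}$ in finite dimension, and for Hilbert–Schmidt $A$ the limit of ${\det}_2$ of finite-dimensional compressions along increasing subspaces with dense union; ${\det}_2(I+K)$ means ${\det}_2(I-(-K))$. *)

theory Defs
  imports "HOL-Analysis.Analysis"
begin

definition fcoef :: "real \<Rightarrow> (real \<Rightarrow> complex) \<Rightarrow> int \<Rightarrow> complex" where
  "fcoef X f k = integral {0..X} (\<lambda>x. f x * cis (- 2 * pi * real_of_int k * x / X)) / complex_of_real X"

text \<open>H^1_per([0,X]) for scalar functions: X-periodic, in L^2([0,X]) (measurable with
  square-integrable modulus; on a bounded interval this gives absolute integrability), and
  sum_k (1+k^2) |f^_k|^2 < infinity.\<close>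
definition H1per_scalar :: "real \<Rightarrow> (real \<Rightarrow> complex) \<Rightarrow> bool" where
  "H1per_scalar X f \<longleftrightarrow>
     (\<forall>x. f (x + X) = f x) \<and>
     f absolutely_integrable_on {0..X} \<and>
     (\<lambda>x. (cmod (f x))^2) integrable_on {0..X} \<and>
     (\<lambda>k::int. (1 + (real_of_int k)^2) * (cmod (fcoef X f k))^2) summable_on UNIV"

definition H1per :: "real \<Rightarrow> (real \<Rightarrow> complex^'n^'n) \<Rightarrow> bool" where
  "H1per X a \<longleftrightarrow> (\<forall>i j. H1per_scalar X (\<lambda>x. a x $ i $ j))"

definition det_fin :: "'i set \<Rightarrow> ('i \<Rightarrow> 'i \<Rightarrow> complex) \<Rightarrow> complex" where
  "det_fin F B = (\<Sum>p | p permutes F. of_int (sign p) * (\<Prod>i\<in>F. B i (p i)))"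

text \<open>2-modified determinant det_2(I+M) = det(I+M) e^{-tr M} of the compression of M to
  the coordinate subspace spanned by the (orthonormal) basis vectors indexed by F.\<close>
definition det2_fin :: "'i set \<Rightarrow> ('i \<Rightarrow> 'i \<Rightarrow> complex) \<Rightarrow> complex" where
  "det2_fin F M = det_fin F (\<lambda>i j. (if i = j then 1 else 0) + M i j) * exp (- (\<Sum>i\<in>F. M i i))"

text \<open>det_2(I+M) for an operator with matrix M in an orthonormal basis indexed by S:
  the limit of det_2 of compressions along increasing finite coordinate subspaces with dense union.\<close>
definition det2 :: "'i set \<Rightarrow> ('i \<Rightarrow> 'i \<Rightarrow> complex) \<Rightarrow> complex" where
  "det2 S M = (THE L. \<forall>F::nat \<Rightarrow> 'i set.
      (\<forall>j. finite (F j) \<and> F j \<subseteq> S) \<and> incseq F \<and> (\<Union>j. F j) = S \<longrightarrow>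
      (\<lambda>j. det2_fin (F j) M) \<longlonglongrightarrow> L)"

definition freq :: "real \<Rightarrow> int \<Rightarrow> real" where
  "freq X k = 2 * pi * real_of_int k / X"

text \<open>Matrix of K(sigma,lambda) = d_x (d_x^2-1)^{-1} A_1 + (d_x^2-1)^{-1}(A_0 + (1-lambda) I)
  in the orthonormal basis e_k v_i = X^{-1/2} e^{2 pi i k x/X} v_i of L^2_per([0,X];C^n),
  indexed by (k,i).  The multipliers act diagonally: d_x -> i xi_k, (d_x^2-1)^{-1} -> -1/(1+xi_k^2);
  multiplication by a matrix function a has entries <e_k v_i, a e_m v_j> = (a_ij)^_(k-m).\<close>
definition Kmat :: "real \<Rightarrow> (real \<Rightarrow> complex^'n^'n) \<Rightarrow> (real \<Rightarrow> complex^'n^'n) \<Rightarrow> real \<Rightarrow> complex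
                    \<Rightarrow> (int \<times> 'n) \<Rightarrow> (int \<times> 'n) \<Rightarrow> complex" where
  "Kmat X a0 a1 \<sigma> lam = (\<lambda>(k, i) (m, j).
     let xk = complex_of_real (freq X k);
         dl = (if k = m \<and> i = j then 1 else 0);
         A1 = fcoef X (\<lambda>x. a1 x $ i $ j) (k - m) + 2 * \<i> * complex_of_real \<sigma> * dl;
         A0 = fcoef X (\<lambda>x. a0 x $ i $ j) (k - m) - (complex_of_real \<sigma>)^2 * dl
              + \<i> * complex_of_real \<sigma> * fcoef X (\<lambda>x. a1 x $ i $ j) (k - m)
     in - ((\<i> * xk) / (1 + xk\<^sup>2)) * A1 - (1 / (1 + xk\<^sup>2)) * (A0 + (1 - lam) * dl))"

text \<open>Index set of H_J = span{e^{2 pi i k x/X} v : |k| <= J, v in C^n}.\<close>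
definition trunc_idx :: "nat \<Rightarrow> (int \<times> 'n) set" where
  "trunc_idx J = {(k, i). \<bar>k\<bar> \<le> int J}"

end

theory Submission
  imports Defs "Jordan_Normal_Form.Determinant" "HOL-Complex_Analysis.Cauchy_Integral_Formula"
begin


lemma mult_mat_sum:
  assumes "A \<in> carrier_mat n n" "B \<in> carrier_mat n n" "i < n" "j < n"
  shows "(A * B) $$ (i,j) = (\<Sum>k<n. A $$ (i,k) * B $$ (k,j))"
  using assms by (simp add: scalar_prod_def atLeast0LessThan)

lemma det_cnj_mat:
  assumes "A \<in> carrier_mat n n"
  shows "Determinant.det (Matrix.mat n n (\<lambda>(i,j). cnj (A $$ (i,j)))) = cnj (Determinant.det A)"
proof -
  have "Determinant.det (Matrix.mat n n (\<lambda>(i,j). cnj (A $$ (i,j)))) =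
    (\<Sum> p \<in> {p. p permutes {0 ..< n}}. of_int (sign p) * (\<Prod> i = 0 ..< n. cnj (A $$ (i, p i))))"
    by (subst det_def'[of _ n]) (auto intro!: sum.cong prod.cong simp: permutes_in_image)
  also have "\<dots> = cnj (Determinant.det A)"
    using assms by (simp add: det_def'[of _ n] cnj_sum cnj_prod)
  finally show ?thesis .
qed

definition ip :: "nat \<Rightarrow> (nat \<Rightarrow> complex) \<Rightarrow> (nat \<Rightarrow> complex) \<Rightarrow> complex" where
  "ip n u v = (\<Sum>r<n. cnj (u r) * v r)"

definition cn :: "nat \<Rightarrow> (nat \<Rightarrow> complex) \<Rightarrow> real" where
  "cn n u = (\<Sum>r<n. (cmod (u r))^2)"

lemma cnj_mult_self: "cnj z * z = (complex_of_real (cmod z))^2"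
proof -
  have "cnj z * z = z * cnj z" by (rule mult.commute)
  also have "\<dots> = of_real ((cmod z)^2)" by (rule complex_norm_square[symmetric])
  finally show ?thesis by simp
qed

lemma ip_self: "ip n u u = complex_of_real (cn n u)"
  unfolding ip_def cn_def of_real_sum
  by (intro sum.cong refl) (simp add: cnj_mult_self)

lemma ip_cnj: "ip n v u = cnj (ip n u v)"
  unfolding ip_def by (simp add: cnj_sum mult.commute)

lemma cn_nonneg: "cn n u \<ge> 0" unfolding cn_def by (simp add: sum_nonneg)

lemma cn_zero: "cn n u = 0 \<Longrightarrow> r < n \<Longrightarrow> u r = 0"
  unfolding cn_def by (subst (asm) sum_nonneg_eq_0_iff) auto

lemma ip_zero_left: "cn n u = 0 \<Longrightarrow> ip n u v = 0"
  unfolding ip_def by (auto intro!: sum.neutral dest: cn_zero)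

lemma ip_diff_sum_right:
  "ip n u (\<lambda>r. v r - (\<Sum>k\<in>K. c k * w k r)) = ip n u v - (\<Sum>k\<in>K. c k * ip n u (w k))"
  unfolding ip_def by (simp add: algebra_simps sum_subtractf sum_distrib_left sum_distrib_right
     sum.swap[of _ K] mult.assoc mult.left_commute)

lemma ip_sum_left:
  "ip n (\<lambda>r. (\<Sum>k\<in>K. c k * w k r)) v = (\<Sum>k\<in>K. cnj (c k) * ip n (w k) v)"
  unfolding ip_def by (simp add: cnj_sum sum_distrib_left sum_distrib_right
     sum.swap[of _ K] mult.assoc mult.left_commute)

lemma cn_pyth:
  assumes "ip n p u = 0"
  shows "cn n (\<lambda>r. u r + p r) = cn n u + cn n p"
proof -
  have "complex_of_real (cn n (\<lambda>r. u r + p r)) = ip n (\<lambda>r. u r + p r) (\<lambda>r. u r + p r)"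
    by (simp add: ip_self)
  also have "\<dots> = ip n u u + ip n u p + ip n p u + ip n p p"
    unfolding ip_def by (simp add: algebra_simps sum.distrib)
  also have "ip n u p = 0" using assms ip_cnj[of n u p] by simp
  finally have "complex_of_real (cn n (\<lambda>r. u r + p r)) = complex_of_real (cn n u + cn n p)"
    using assms by (simp add: ip_self)
  then show ?thesis using of_real_eq_iff by blast
qed

lemma ip_cong: "(\<And>r. r < n \<Longrightarrow> u r = u' r) \<Longrightarrow> (\<And>r. r < n \<Longrightarrow> v r = v' r) \<Longrightarrow> ip n u v = ip n u' v'"
  unfolding ip_def by (intro sum.cong) auto

lemma cn_cong: "(\<And>r. r < n \<Longrightarrow> u r = u' r) \<Longrightarrow> cn n u = cn n u'"
  unfolding cn_def by (intro sum.cong) auto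

definition colf :: "complex mat \<Rightarrow> nat \<Rightarrow> nat \<Rightarrow> complex" where
  "colf M j = (\<lambda>r. M $$ (r,j))"

lemma gs_step:
  fixes Q :: "complex mat"
  assumes Q: "Q \<in> carrier_mat n n" and m: "m < n"
    and orth: "\<And>i j. i < m \<Longrightarrow> j < m \<Longrightarrow> i \<noteq> j \<Longrightarrow> ip n (colf Q i) (colf Q j) = 0"
  shows "\<exists>V \<in> carrier_mat n n. Determinant.det V = 1 \<and>
     (\<forall>j r. j < n \<longrightarrow> j \<noteq> m \<longrightarrow> r < n \<longrightarrow> (Q * V) $$ (r,j) = Q $$ (r,j)) \<and>
     (\<forall>i<m. ip n (colf Q i) (colf (Q * V) m) = 0) \<and>
     cn n (colf (Q * V) m) \<le> cn n (colf Q m)"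
proof -
  define \<mu> where "\<mu> i = ip n (colf Q i) (colf Q m) / complex_of_real (cn n (colf Q i))" for i
  define V where "V = Matrix.mat n n (\<lambda>(r,c). if r = c then 1 else if c = m \<and> r < m then - \<mu> r else (0::complex))"
  have V: "V \<in> carrier_mat n n" unfolding V_def by simp
  have ut: "upper_triangular V" unfolding V_def by (auto simp: upper_triangular_def)
  have "Determinant.det V = prod_list (diag_mat V)" by (rule det_upper_triangular[OF ut V])
  also have "\<dots> = 1" unfolding prod_list_diag_prod using V by (simp add: V_def)
  finally have detV: "Determinant.det V = 1" .
  have col_other: "(Q * V) $$ (r,j) = Q $$ (r,j)" if "j < n" "j \<noteq> m" "r < n" for j r
  proof -
    have "(Q * V) $$ (r,j) = (\<Sum>k<n. Q $$ (r,k) * V $$ (k,j))" by (rule mult_mat_sum[OF Q V that(3) that(1)])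
    also have "\<dots> = (\<Sum>k<n. if k = j then Q $$ (r,j) else 0)"
      using that by (intro sum.cong) (auto simp: V_def)
    also have "\<dots> = Q $$ (r,j)" using that by simp
    finally show ?thesis .
  qed
  have col_m: "(Q * V) $$ (r,m) = Q $$ (r,m) - (\<Sum>k<m. \<mu> k * Q $$ (k', k))" if "r < n" "k' = r" for r k'
  proof -
    have "(Q * V) $$ (r,m) = (\<Sum>k<n. Q $$ (r,k) * V $$ (k,m))" by (rule mult_mat_sum[OF Q V that(1) m])
    also have "\<dots> = (\<Sum>k<n. (if k = m then Q $$ (r,m) else 0) + (if k < m then - (\<mu> k * Q $$ (r,k)) else 0))"
      using that m by (intro sum.cong) (auto simp: V_def)
    also have "\<dots> = Q $$ (r,m) + (\<Sum>k\<in>{..<n} \<inter> {k. k < m}. - (\<mu> k * Q $$ (r,k)))"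
      using m by (simp add: sum.distrib sum.If_cases)
    also have "{..<n} \<inter> {k. k < m} = {..<m}" using m by auto
    finally show ?thesis using that by (simp add: sum_negf)
  qed
  define p where "p = (\<lambda>r. \<Sum>k<m. \<mu> k * colf Q k r)"
  have orth': "ip n (colf Q i) (colf (Q * V) m) = 0" if i: "i < m" for i
  proof -
    have "ip n (colf Q i) (colf (Q * V) m) = ip n (colf Q i) (\<lambda>r. colf Q m r - (\<Sum>k\<in>{..<m}. \<mu> k * colf Q k r))"
      by (intro ip_cong) (auto simp: colf_def col_m)
    also have "\<dots> = ip n (colf Q i) (colf Q m) - (\<Sum>k\<in>{..<m}. \<mu> k * ip n (colf Q i) (colf Q k))"
      by (rule ip_diff_sum_right)
    also have "(\<Sum>k\<in>{..<m}. \<mu> k * ip n (colf Q i) (colf Q k)) = \<mu> i * ip n (colf Q i) (colf Q i)"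
      using i by (subst sum.remove[of _ i]) (auto intro!: sum.neutral simp: orth)
    also have "ip n (colf Q i) (colf Q m) - \<mu> i * ip n (colf Q i) (colf Q i) = 0"
    proof (cases "cn n (colf Q i) = 0")
      case True thus ?thesis by (simp add: ip_zero_left)
    next
      case False thus ?thesis by (simp add: \<mu>_def ip_self)
    qed
    finally show ?thesis .
  qed
  have "ip n p (colf (Q * V) m) = (\<Sum>k\<in>{..<m}. cnj (\<mu> k) * ip n (colf Q k) (colf (Q * V) m))"
    unfolding p_def by (rule ip_sum_left)
  also have "\<dots> = 0" by (auto intro!: sum.neutral simp: orth')
  finally have "ip n p (colf (Q * V) m) = 0" .
  hence "cn n (\<lambda>r. colf (Q * V) m r + p r) = cn n (colf (Q * V) m) + cn n p" by (rule cn_pyth)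
  also have "cn n (\<lambda>r. colf (Q * V) m r + p r) = cn n (colf Q m)"
    by (intro cn_cong) (auto simp: colf_def col_m p_def)
  finally have "cn n (colf (Q * V) m) \<le> cn n (colf Q m)" using cn_nonneg[of n p] by linarith
  thus ?thesis using V detV col_other orth' by blast
qed

lemma gs:
  fixes A :: "complex mat"
  assumes A: "A \<in> carrier_mat n n"
  shows "m \<le> n \<Longrightarrow> \<exists>U \<in> carrier_mat n n. Determinant.det U = 1 \<and>
     (\<forall>i j. i < m \<longrightarrow> j < m \<longrightarrow> i \<noteq> j \<longrightarrow> ip n (colf (A * U) i) (colf (A * U) j) = 0) \<and>
     (\<forall>j<n. cn n (colf (A * U) j) \<le> cn n (colf A j)) \<and>
     (\<forall>j r. m \<le> j \<longrightarrow> j < n \<longrightarrow> r < n \<longrightarrow> (A * U) $$ (r,j) = A $$ (r,j))"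
proof (induction m)
  case 0
  show ?case
    by (rule bexI[of _ "1\<^sub>m n"]) (use A in auto)
next
  case (Suc m)
  then obtain U where U: "U \<in> carrier_mat n n" "Determinant.det U = 1"
    and o: "\<And>i j. i < m \<Longrightarrow> j < m \<Longrightarrow> i \<noteq> j \<Longrightarrow> ip n (colf (A * U) i) (colf (A * U) j) = 0"
    and c: "\<And>j. j < n \<Longrightarrow> cn n (colf (A * U) j) \<le> cn n (colf A j)"
    and e: "\<And>j r. m \<le> j \<Longrightarrow> j < n \<Longrightarrow> r < n \<Longrightarrow> (A * U) $$ (r,j) = A $$ (r,j)"
    by auto
  have m: "m < n" using Suc by simp
  have Q: "A * U \<in> carrier_mat n n" using A U by simp
  from gs_step[OF Q m o] obtain V where V: "V \<in> carrier_mat n n" "Determinant.det V = 1"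
    and vo: "\<And>j r. j < n \<Longrightarrow> j \<noteq> m \<Longrightarrow> r < n \<Longrightarrow> (A * U * V) $$ (r,j) = (A * U) $$ (r,j)"
    and vm: "\<And>i. i < m \<Longrightarrow> ip n (colf (A * U) i) (colf (A * U * V) m) = 0"
    and vc: "cn n (colf (A * U * V) m) \<le> cn n (colf (A * U) m)"
    by blast
  have assoc: "A * (U * V) = A * U * V" using A U V by (simp add: assoc_mult_mat)
  have UV: "U * V \<in> carrier_mat n n" using U V by simp
  have dUV: "Determinant.det (U * V) = 1" using U V by (simp add: det_mult)
  have colsame: "ip n (colf (A * U * V) i) w = ip n (colf (A * U) i) w" if "i < m" for i w
    using that m by (intro ip_cong) (auto simp: colf_def vo)
  have colsame2: "ip n w (colf (A * U * V) i) = ip n w (colf (A * U) i)" if "i < m" for i w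
    using that m by (intro ip_cong) (auto simp: colf_def vo)
  have orthS: "ip n (colf (A * (U * V)) i) (colf (A * (U * V)) j) = 0"
    if ij: "i < Suc m" "j < Suc m" "i \<noteq> j" for i j
  proof -
    consider "i < m" "j < m" | "i < m" "j = m" | "i = m" "j < m" using ij unfolding less_Suc_eq by blast
    thus ?thesis
    proof cases
      case 1 thus ?thesis using o ij by (simp add: assoc colsame colsame2)
    next
      case 2 thus ?thesis using vm by (simp add: assoc colsame)
    next
      case 3 thus ?thesis using vm ip_cnj by (metis assoc colsame2 complex_cnj_zero)
    qed
  qed
  have cnS: "cn n (colf (A * (U * V)) j) \<le> cn n (colf A j)" if "j < n" for j
  proof (cases "j = m")
    case True
    have "cn n (colf (A * U) m) = cn n (colf A m)" using e m by (intro cn_cong) (auto simp: colf_def)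
    thus ?thesis using vc True by (simp add: assoc)
  next
    case False
    have "cn n (colf (A * U * V) j) = cn n (colf (A * U) j)" using vo that False
      by (intro cn_cong) (auto simp: colf_def)
    thus ?thesis using c[OF that] by (simp add: assoc)
  qed
  have eS: "(A * (U * V)) $$ (r,j) = A $$ (r,j)" if "Suc m \<le> j" "j < n" "r < n" for j r
    using that vo e by (simp add: assoc)
  show ?case using UV dUV orthS cnS eS by blast
qed

lemma hadamard_sq:
  fixes A :: "complex mat"
  assumes A: "A \<in> carrier_mat n n"
  shows "(cmod (Determinant.det A))^2 \<le> (\<Prod>j<n. cn n (colf A j))"
proof -
  obtain U where U: "U \<in> carrier_mat n n" "Determinant.det U = 1"
    and o: "\<And>i j. i < n \<Longrightarrow> j < n \<Longrightarrow> i \<noteq> j \<Longrightarrow> ip n (colf (A * U) i) (colf (A * U) j) = 0"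
    and c: "\<And>j. j < n \<Longrightarrow> cn n (colf (A * U) j) \<le> cn n (colf A j)"
    using gs[OF A, of n] by auto
  define Q where "Q = A * U"
  have Q: "Q \<in> carrier_mat n n" using A U by (simp add: Q_def)
  have dQ: "Determinant.det Q = Determinant.det A" using A U by (simp add: Q_def det_mult)
  define QH where "QH = transpose_mat (Matrix.mat n n (\<lambda>(i,j). cnj (Q $$ (i,j))))"
  have QH: "QH \<in> carrier_mat n n" by (simp add: QH_def)
  have dQH: "Determinant.det QH = cnj (Determinant.det Q)"
  proof -
    have M: "Matrix.mat n n (\<lambda>(i,j). cnj (Q $$ (i,j))) \<in> carrier_mat n n" by simp
    show ?thesis unfolding QH_def Determinant.det_transpose[OF M] det_cnj_mat[OF Q] ..
  qed
  have G: "(QH * Q) $$ (i,j) = ip n (colf Q i) (colf Q j)" if "i < n" "j < n" for i j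
    unfolding mult_mat_sum[OF QH Q that] ip_def colf_def using that by (intro sum.cong) (auto simp: QH_def)
  have ut: "upper_triangular (QH * Q)"
  proof (rule upper_triangularI)
    fix i j assume "j < i" "i < dim_row (QH * Q)"
    hence "i < n" "j < n" "i \<noteq> j" using QH by auto
    thus "(QH * Q) $$ (i,j) = 0" using o[of i j] G[of i j] unfolding Q_def by simp
  qed
  have "Determinant.det (QH * Q) = prod_list (diag_mat (QH * Q))"
    by (rule det_upper_triangular[OF ut, of n]) (use QH Q in simp)
  also have "\<dots> = (\<Prod>j = 0..<n. ip n (colf Q j) (colf Q j))"
    unfolding prod_list_diag_prod using QH by (simp add: G)
  also have "\<dots> = complex_of_real (\<Prod>j<n. cn n (colf Q j))"
    by (simp add: ip_self atLeast0LessThan)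
  finally have 1: "Determinant.det (QH * Q) = complex_of_real (\<Prod>j<n. cn n (colf Q j))" .
  have "Determinant.det (QH * Q) = cnj (Determinant.det Q) * Determinant.det Q"
    using QH Q by (simp add: det_mult dQH)
  also have "\<dots> = complex_of_real ((cmod (Determinant.det Q))^2)" by (simp add: cnj_mult_self)
  finally have "(cmod (Determinant.det Q))^2 = (\<Prod>j<n. cn n (colf Q j))" using 1 of_real_eq_iff by metis
  also have "\<dots> \<le> (\<Prod>j<n. cn n (colf A j))"
    by (intro prod_mono) (auto simp: cn_nonneg c Q_def)
  finally show ?thesis by (simp add: dQ)
qed

lemma det_fin_mat:
  assumes e: "bij_betw e {0..<n} F"
  shows "det_fin F B = Determinant.det (Matrix.mat n n (\<lambda>(i,j). B (e i) (e j)))"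
proof -
  have fin: "finite F" using e bij_betw_finite by blast
  have inj: "inj_on e {0..<n}" using e bij_betw_def by blast
  define e' where "e' = inv_into {0..<n} e"
  have e': "bij_betw e' F {0..<n}" unfolding e'_def by (rule bij_betw_inv_into[OF e])
  have e'e: "e' (e x) = x" if "x \<in> {0..<n}" for x
    unfolding e'_def using that inj by (simp add: inv_into_f_f)
  have ee': "e (e' y) = y" if "y \<in> F" for y
    unfolding e'_def using that e by (simp add: bij_betw_inv_into_right)
  have "Determinant.det (Matrix.mat n n (\<lambda>(i,j). B (e i) (e j))) =
     (\<Sum>q \<in> {q. q permutes {0..<n}}. of_int (sign q) * (\<Prod>i = 0..<n. B (e i) (e (q i))))"
    by (subst det_def'[of _ n]) (auto intro!: sum.cong prod.cong simp: permutes_in_image)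
  also have "\<dots> = det_fin F B"
    unfolding det_fin_def
  proof (rule sum.reindex_bij_witness[where j = "map_permutation {0..<n} e" and i = "map_permutation F e'"])
    fix q assume q: "q \<in> {q. q permutes {0..<n}}"
    show "map_permutation F e' (map_permutation {0..<n} e q) = q"
      using q e e'e by (auto intro!: map_permutation_compose_inv)
    show "map_permutation {0..<n} e q \<in> {p. p permutes F}"
      using q e by (auto intro!: map_permutation_permutes)
    have sg: "sign (map_permutation {0..<n} e q) = sign q"
      using q inj by (intro sign_map_permutation) auto
    have "(\<Prod>i\<in>F. B i (map_permutation {0..<n} e q i)) =
          (\<Prod>i\<in>{0..<n}. B (e i) (map_permutation {0..<n} e q (e i)))"
      by (rule prod.reindex_bij_betw[OF e, symmetric])
    also have "\<dots> = (\<Prod>i = 0..<n. B (e i) (e (q i)))"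
      using inj by (intro prod.cong refl) (simp add: map_permutation_apply)
    finally show "of_int (sign (map_permutation {0..<n} e q)) * (\<Prod>i\<in>F. B i (map_permutation {0..<n} e q i)) =
       of_int (sign q) * (\<Prod>i = 0..<n. B (e i) (e (q i)))" by (simp add: sg)
  next
    fix p assume p: "p \<in> {p. p permutes F}"
    show "map_permutation {0..<n} e (map_permutation F e' p) = p"
      using p e' ee' by (auto intro!: map_permutation_compose_inv)
    show "map_permutation F e' p \<in> {q. q permutes {0..<n}}"
      using p e' by (auto intro!: map_permutation_permutes)
  qed
  finally show ?thesis ..
qed

lemma hadamard_fin:
  assumes fin: "finite F"
  shows "(cmod (det_fin F B))^2 \<le> (\<Prod>q\<in>F. \<Sum>p\<in>F. (cmod (B p q))^2)"
proof -
  obtain e where e: "bij_betw e {0..<card F} F" using ex_bij_betw_nat_finite[OF fin] by blast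
  define n where "n = card F"
  define M where "M = Matrix.mat n n (\<lambda>(i,j). B (e i) (e j))"
  have M: "M \<in> carrier_mat n n" by (simp add: M_def)
  have "(cmod (det_fin F B))^2 = (cmod (Determinant.det M))^2"
    using det_fin_mat[OF e] by (simp add: M_def n_def)
  also have "\<dots> \<le> (\<Prod>j<n. cn n (colf M j))" by (rule hadamard_sq[OF M])
  also have "\<dots> = (\<Prod>j\<in>{0..<n}. \<Sum>p\<in>F. (cmod (B p (e j)))^2)"
  proof (rule prod.cong)
    fix j assume j: "j \<in> {0..<n}"
    have "cn n (colf M j) = (\<Sum>r\<in>{0..<n}. (cmod (B (e r) (e j)))^2)"
      unfolding cn_def colf_def M_def using j by (auto intro!: sum.cong simp: atLeast0LessThan)
    also have "\<dots> = (\<Sum>p\<in>F. (cmod (B p (e j)))^2)"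
      by (rule sum.reindex_bij_betw[OF e[folded n_def]])
    finally show "cn n (colf M j) = (\<Sum>p\<in>F. (cmod (B p (e j)))^2)" .
  qed (simp add: atLeast0LessThan)
  also have "\<dots> = (\<Prod>q\<in>F. \<Sum>p\<in>F. (cmod (B p q))^2)"
    by (rule prod.reindex_bij_betw[OF e[folded n_def]])
  finally show ?thesis .
qed

definition hs :: "'i set \<Rightarrow> ('i \<Rightarrow> 'i \<Rightarrow> complex) \<Rightarrow> real" where
  "hs F M = (\<Sum>q\<in>F. \<Sum>p\<in>F. (cmod (M p q))^2)"

lemma hs_nonneg: "hs F M \<ge> 0" unfolding hs_def by (intro sum_nonneg) auto

lemma cmod_one_plus_sq: "(cmod (1 + z))^2 = 1 + 2 * Re z + (cmod z)^2"
  unfolding cmod_power2 by (simp add: power2_eq_square algebra_simps)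

lemma det2_bound_sq:
  assumes fin: "finite F"
  shows "(cmod (det2_fin F M))^2 \<le> exp (hs F M)"
proof -
  define B where "B = (\<lambda>i j. (if i = j then 1 else 0) + M i j)"
  define s where "s q = (\<Sum>p\<in>F. (cmod (M p q))^2)" for q
  have col: "(\<Sum>p\<in>F. (cmod (B p q))^2) = 1 + 2 * Re (M q q) + s q" if q: "q \<in> F" for q
  proof -
    have "(\<Sum>p\<in>F. (cmod (B p q))^2) = (cmod (B q q))^2 + (\<Sum>p\<in>F-{q}. (cmod (B p q))^2)"
      using q fin by (simp add: sum.remove)
    also have "(\<Sum>p\<in>F-{q}. (cmod (B p q))^2) = (\<Sum>p\<in>F-{q}. (cmod (M p q))^2)"
      by (intro sum.cong) (auto simp: B_def)
    also have "s q = (cmod (M q q))^2 + (\<Sum>p\<in>F-{q}. (cmod (M p q))^2)"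
      unfolding s_def using q fin by (simp add: sum.remove)
    ultimately show ?thesis by (simp add: B_def cmod_one_plus_sq)
  qed
  have "(cmod (det2_fin F M))^2 = (cmod (det_fin F B))^2 * (cmod (exp (- (\<Sum>i\<in>F. M i i))))^2"
    unfolding det2_fin_def B_def by (simp add: norm_mult power_mult_distrib)
  also have "(cmod (exp (- (\<Sum>i\<in>F. M i i))))^2 = (\<Prod>q\<in>F. exp (- 2 * Re (M q q)))"
    by (simp add: norm_exp_eq_Re Re_sum exp_sum[symmetric] fin power2_eq_square exp_add[symmetric] sum_negf
        sum_distrib_left)
  also have "(cmod (det_fin F B))^2 * (\<Prod>q\<in>F. exp (- 2 * Re (M q q))) \<le>
      (\<Prod>q\<in>F. \<Sum>p\<in>F. (cmod (B p q))^2) * (\<Prod>q\<in>F. exp (- 2 * Re (M q q)))"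
    by (intro mult_right_mono hadamard_fin fin prod_nonneg) auto
  also have "\<dots> = (\<Prod>q\<in>F. (1 + 2 * Re (M q q) + s q) * exp (- 2 * Re (M q q)))"
    by (simp add: prod.distrib col)
  also have "\<dots> \<le> (\<Prod>q\<in>F. exp (s q))"
  proof (rule prod_mono)
    fix q assume q: "q \<in> F"
    have s0: "s q \<ge> 0" unfolding s_def by (intro sum_nonneg) auto
    have "1 + 2 * Re (M q q) + s q \<ge> 0" using col[OF q] by (metis sum_nonneg zero_le_power2)
    moreover have "1 + 2 * Re (M q q) + s q \<le> exp (2 * Re (M q q) + s q)"
      using exp_ge_add_one_self[of "2 * Re (M q q) + s q"] by linarith
    moreover have "exp (2 * Re (M q q) + s q) * exp (- 2 * Re (M q q)) = exp (s q)"
      by (simp add: exp_add[symmetric])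
    ultimately show "0 \<le> (1 + 2 * Re (M q q) + s q) * exp (- 2 * Re (M q q)) \<and>
       (1 + 2 * Re (M q q) + s q) * exp (- 2 * Re (M q q)) \<le> exp (s q)"
      by (metis mult_nonneg_nonneg mult_right_mono exp_ge_zero)
  qed
  also have "\<dots> = exp (hs F M)" unfolding hs_def s_def by (simp add: exp_sum fin)
  finally show ?thesis .
qed

lemma det2_bound:
  assumes fin: "finite F"
  shows "cmod (det2_fin F M) \<le> exp (hs F M / 2)"
proof -
  have "(cmod (det2_fin F M))^2 \<le> (exp (hs F M / 2))^2"
    using det2_bound_sq[OF fin, of M] by (simp add: exp_double[symmetric] power2_eq_square exp_add[symmetric])
  thus ?thesis by (rule power2_le_imp_le) simp
qed




lemma sqrt_hs_L2: "sqrt (hs F M) = L2_set (\<lambda>(q,p). cmod (M p q)) (F \<times> F)"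
  unfolding hs_def L2_set_def by (simp add: sum.cartesian_product case_prod_beta)

lemma sqrt_hs_add: "sqrt (hs F (\<lambda>p q. A p q + C p q)) \<le> sqrt (hs F A) + sqrt (hs F C)"
proof -
  have "L2_set (\<lambda>(q,p). cmod (A p q + C p q)) (F \<times> F) \<le> L2_set (\<lambda>x. (\<lambda>(q,p). cmod (A p q)) x + (\<lambda>(q,p). cmod (C p q)) x) (F \<times> F)"
    by (intro L2_set_mono) (auto simp: norm_triangle_ineq)
  also have "\<dots> \<le> L2_set (\<lambda>(q,p). cmod (A p q)) (F \<times> F) + L2_set (\<lambda>(q,p). cmod (C p q)) (F \<times> F)"
    by (rule L2_set_triangle_ineq)
  finally show ?thesis by (simp add: sqrt_hs_L2)
qed

lemma hs_scale: "hs F (\<lambda>p q. c * M p q) = (cmod c)^2 * hs F M"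
  unfolding hs_def by (simp add: norm_mult power_mult_distrib sum_distrib_left)

lemma det2_fin_cong: "(\<And>p q. p \<in> F \<Longrightarrow> q \<in> F \<Longrightarrow> A p q = B p q) \<Longrightarrow> det2_fin F A = det2_fin F B"
  unfolding det2_fin_def det_fin_def
  by (intro arg_cong2[where f = "(*)"] sum.cong prod.cong arg_cong[where f = exp] arg_cong[where f = uminus])
     (auto simp: permutes_in_image)

lemma hs_zero: "finite F \<Longrightarrow> hs F M = 0 \<Longrightarrow> p \<in> F \<Longrightarrow> q \<in> F \<Longrightarrow> M p q = 0"
  unfolding hs_def
  by (subst (asm) sum_nonneg_eq_0_iff) (auto intro!: sum_nonneg simp: sum_nonneg_eq_0_iff)

lemma det2_fin_holo: "finite F \<Longrightarrow> (\<lambda>z. det2_fin F (\<lambda>p q. B p q + z * D p q)) holomorphic_on UNIV"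
  unfolding det2_fin_def det_fin_def
  by (intro holomorphic_intros holomorphic_on_prod holomorphic_on_sum) 

lemma det2_lip:
  assumes fin: "finite F" and HA: "sqrt (hs F A) \<le> H" and HB: "sqrt (hs F B) \<le> H"
  shows "cmod (det2_fin F A - det2_fin F B) \<le> exp ((3 * H + 1)^2 / 2) * sqrt (hs F (\<lambda>p q. A p q - B p q))"
proof -
  define D where "D = (\<lambda>p q. A p q - B p q)"
  define d where "d = sqrt (hs F D)"
  have d0: "d \<ge> 0" unfolding d_def by (simp add: hs_nonneg)
  have H0: "H \<ge> 0" using HA by (meson order.trans real_sqrt_ge_zero hs_nonneg)
  have dH: "d \<le> 2 * H"
  proof -
    have "d \<le> sqrt (hs F A) + sqrt (hs F (\<lambda>p q. (-1) * B p q))"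
      unfolding d_def D_def using sqrt_hs_add[of F A "\<lambda>p q. (-1) * B p q"] by simp
    also have "sqrt (hs F (\<lambda>p q. (-1) * B p q)) = sqrt (hs F B)" using hs_scale[of F "-1" B] by simp
    finally show ?thesis using HA HB by linarith
  qed
  show ?thesis
  proof (cases "d = 0")
    case True
    hence "hs F D = 0" unfolding d_def by simp
    hence "det2_fin F A = det2_fin F B" using hs_zero[OF fin, of D] by (intro det2_fin_cong) (auto simp: D_def)
    thus ?thesis by (simp add: hs_nonneg)
  next
    case False
    hence dpos: "d > 0" using d0 by simp
    define g where "g = (\<lambda>z. det2_fin F (\<lambda>p q. B p q + (z / complex_of_real d) * D p q))"
    have gh: "g holomorphic_on UNIV"
    proof -
      have "(\<lambda>z. det2_fin F (\<lambda>p q. B p q + z * (D p q / complex_of_real d))) holomorphic_on UNIV"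
        by (rule det2_fin_holo[OF fin])
      thus ?thesis unfolding g_def by (simp add: mult.commute times_divide_eq_right divide_inverse mult.left_commute)
    qed
    define K where "K = exp ((3 * H + 1)^2 / 2)"
    have gbound: "cmod (g x) \<le> K" if x: "cmod x \<le> d + 1" for x
    proof -
      have "sqrt (hs F (\<lambda>p q. B p q + (x / complex_of_real d) * D p q)) \<le> sqrt (hs F B) + sqrt (hs F (\<lambda>p q. (x / complex_of_real d) * D p q))"
        by (rule sqrt_hs_add)
      also have "sqrt (hs F (\<lambda>p q. (x / complex_of_real d) * D p q)) = cmod x / d * d"
      proof -
        have "hs F (\<lambda>p q. (x / complex_of_real d) * D p q) = (cmod (x / complex_of_real d))^2 * hs F D"
          by (rule hs_scale)
        hence "sqrt (hs F (\<lambda>p q. (x / complex_of_real d) * D p q)) = cmod (x / complex_of_real d) * d"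
          by (simp add: real_sqrt_mult d_def)
        thus ?thesis using d0 by (simp add: norm_divide)
      qed
      also have "\<dots> = cmod x" using dpos by simp
      finally have "sqrt (hs F (\<lambda>p q. B p q + (x / complex_of_real d) * D p q)) \<le> 3 * H + 1"
        using x HB dH by linarith
      hence "hs F (\<lambda>p q. B p q + (x / complex_of_real d) * D p q) \<le> (3 * H + 1)^2"
        using H0 by (metis real_sqrt_le_iff real_sqrt_unique add_nonneg_nonneg mult_nonneg_nonneg zero_le_one
                 zero_le_numeral sqrt_le_D)
      thus ?thesis unfolding g_def K_def
        using det2_bound[OF fin] by (meson divide_right_mono exp_le_cancel_iff order.trans zero_le_numeral)
    qed
    have dbound: "cmod (deriv g z) \<le> K" if z: "z \<in> closed_segment 0 (complex_of_real d)" for z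
    proof -
      have "cmod z \<le> d" using z d0 by (metis segment_bound(1) norm_of_real abs_of_nonneg diff_zero norm_minus_commute)
      have "cmod ((deriv ^^ 1) g z) \<le> fact 1 * K / 1 ^ 1"
      proof (rule Cauchy_inequality)
        show "g holomorphic_on ball z 1" using gh by (rule holomorphic_on_subset) auto
        show "continuous_on (cball z 1) g" using gh holomorphic_on_imp_continuous_on continuous_on_subset by blast
        fix x assume "cmod (z - x) = 1"
        hence "cmod x \<le> d + 1" using \<open>cmod z \<le> d\<close> norm_triangle_ineq2[of x z] by (simp add: norm_minus_commute)
        thus "cmod (g x) \<le> K" by (rule gbound)
      qed simp
      thus ?thesis by simp
    qed
    have "cmod (g (complex_of_real d) - g 0) \<le> K * cmod (complex_of_real d - 0)"
    proof (rule field_differentiable_bound[where f' = "deriv g" and S = "closed_segment 0 (complex_of_real d)"])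
      show "convex (closed_segment 0 (complex_of_real d))" by simp
      fix z show "(g has_field_derivative deriv g z) (at z within closed_segment 0 (complex_of_real d))"
        using gh by (intro holomorphic_derivI) auto
    qed (auto simp: dbound)
    moreover have "g (complex_of_real d) = det2_fin F A"
      unfolding g_def using dpos by (intro det2_fin_cong) (auto simp: D_def)
    moreover have "g 0 = det2_fin F B" unfolding g_def by simp
    ultimately show ?thesis using d0 by (simp add: K_def d_def D_def)
  qed
qed




lemma tel: "(\<Sum>t\<in>{Suc J..<Suc J + N}. 1 / (real t * (real t + 1))) = 1 / (real J + 1) - 1 / (real J + 1 + real N)"
proof (induction N)
  case 0 thus ?case by simp
next
  case (Suc N)
  have "(\<Sum>t\<in>{Suc J..<Suc J + Suc N}. 1 / (real t * (real t + 1))) =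
        (\<Sum>t\<in>{Suc J..<Suc J + N}. 1 / (real t * (real t + 1))) + 1 / (real (Suc J + N) * (real (Suc J + N) + 1))"
    by simp
  also have "\<dots> = 1 / (real J + 1) - 1 / (real J + 1 + real (Suc N))"
  proof -
    have a: "real J + 1 + real N > 0" by simp
    have e: "1 / (a * (a + 1)) = 1 / a - 1 / (a + 1)" if "a > 0" for a :: real
      using that by (simp add: field_simps)
    show ?thesis unfolding Suc.IH using e[OF a] by (simp add: algebra_simps)
  qed
  finally show ?case .
qed

lemma sum_inv_sq_nat:
  assumes "finite K" "\<And>t. t \<in> K \<Longrightarrow> t > J"
  shows "(\<Sum>t\<in>K. 1 / (1 + (real t)^2)) \<le> 2 / (real J + 1)"
proof -
  obtain N where N: "K \<subseteq> {Suc J..<Suc J + N}"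
  proof
    show "K \<subseteq> {Suc J..<Suc J + (Suc (Max (insert 0 K)))}"
    proof
      fix x assume x: "x \<in> K"
      have "x \<le> Max (insert 0 K)" using assms(1) x by simp
      thus "x \<in> {Suc J..<Suc J + (Suc (Max (insert 0 K)))}" using assms(2)[OF x] by simp
    qed
  qed
  have "(\<Sum>t\<in>K. 1 / (1 + (real t)^2)) \<le> (\<Sum>t\<in>{Suc J..<Suc J + N}. 1 / (1 + (real t)^2))"
    by (intro sum_mono2 N) auto
  also have "\<dots> \<le> (\<Sum>t\<in>{Suc J..<Suc J + N}. 2 * (1 / (real t * (real t + 1))))"
  proof (intro sum_mono)
    fix t assume t: "t \<in> {Suc J..<Suc J + N}"
    hence "real t \<ge> 1" by auto
    hence tt: "real t \<le> real t * real t" using mult_right_mono[of 1 "real t" "real t"] by simp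
    hence "real t * (real t + 1) \<le> 2 * (1 + (real t)^2)"
      by (simp add: power2_eq_square algebra_simps)
    moreover have "real t * (real t + 1) > 0" using \<open>real t \<ge> 1\<close> by simp
    ultimately have "2 / (2 * (1 + (real t)^2)) \<le> 2 / (real t * (real t + 1))"
      by (intro divide_left_mono) auto
    moreover have "2 / (2 * (1 + (real t)^2)) = 1 / (1 + (real t)^2)"
      by (subst mult_divide_mult_cancel_left[of 2, symmetric]) simp_all
    ultimately show "1 / (1 + (real t)^2) \<le> 2 * (1 / (real t * (real t + 1)))" by simp
  qed
  also have "\<dots> = 2 * (1 / (real J + 1) - 1 / (real J + 1 + real N))"
    by (subst sum_distrib_left[symmetric], subst tel, rule refl)
  also have "\<dots> \<le> 2 / (real J + 1)" by simp
  finally show ?thesis .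
qed

lemma sum_inv_sq_int:
  assumes K: "finite K" "\<And>k. k \<in> K \<Longrightarrow> \<bar>k\<bar> > int J"
  shows "(\<Sum>k\<in>K. 1 / (1 + (real_of_int k)^2)) \<le> 4 / (real J + 1)"
proof -
  define Kp where "Kp = {k\<in>K. k > 0}"
  define Kn where "Kn = {k\<in>K. k < 0}"
  have KK: "K = Kp \<union> Kn" "Kp \<inter> Kn = {}" using K(2) by (force simp: Kp_def Kn_def)+
  have fin: "finite Kp" "finite Kn" using K(1) by (auto simp: Kp_def Kn_def)
  have "(\<Sum>k\<in>Kp. 1 / (1 + (real_of_int k)^2)) = (\<Sum>t\<in>nat ` Kp. 1 / (1 + (real t)^2))"
    by (subst sum.reindex) (auto simp: inj_on_def Kp_def)
  also have "\<dots> \<le> 2 / (real J + 1)"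
    using fin K(2) by (intro sum_inv_sq_nat) (force simp: Kp_def zless_nat_eq_int_zless)+
  finally have 1: "(\<Sum>k\<in>Kp. 1 / (1 + (real_of_int k)^2)) \<le> 2 / (real J + 1)" .
  have "(\<Sum>k\<in>Kn. 1 / (1 + (real_of_int k)^2)) = (\<Sum>t\<in>(\<lambda>k. nat (-k)) ` Kn. 1 / (1 + (real t)^2))"
    by (subst sum.reindex) (auto simp: inj_on_def Kn_def)
  also have "\<dots> \<le> 2 / (real J + 1)"
    using fin K(2) by (intro sum_inv_sq_nat) (force simp: Kn_def zless_nat_eq_int_zless)+
  finally have 2: "(\<Sum>k\<in>Kn. 1 / (1 + (real_of_int k)^2)) \<le> 2 / (real J + 1)" .
  have "(\<Sum>k\<in>K. 1 / (1 + (real_of_int k)^2)) = (\<Sum>k\<in>Kp. 1 / (1 + (real_of_int k)^2)) + (\<Sum>k\<in>Kn. 1 / (1 + (real_of_int k)^2))"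
    using KK fin by (simp add: sum.union_disjoint)
  with 1 2 show ?thesis by simp
qed

lemma sum_inv_sq_all:
  assumes K: "finite K"
  shows "(\<Sum>k\<in>K. 1 / (1 + (real_of_int k)^2)) \<le> 5"
proof -
  have "(\<Sum>k\<in>K. 1 / (1 + (real_of_int k)^2)) = (\<Sum>k\<in>K \<inter> {0}. 1 / (1 + (real_of_int k)^2)) + (\<Sum>k\<in>K - {0}. 1 / (1 + (real_of_int k)^2))"
    using K by (metis (no_types) Diff_eq sum.Int_Diff Int_commute)
  also have "(\<Sum>k\<in>K \<inter> {0}. 1 / (1 + (real_of_int k)^2)) \<le> 1"
    by (cases "0 \<in> K") (auto simp: Int_insert_right)
  also have "(\<Sum>k\<in>K - {0}. 1 / (1 + (real_of_int k)^2)) \<le> 4 / (real 0 + 1)"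
    using K by (intro sum_inv_sq_int) auto
  finally show ?thesis by simp
qed

lemma row_sum:
  fixes h :: "'n::finite \<Rightarrow> int \<Rightarrow> real"
  assumes Q: "finite Q" and h0: "\<And>j l. h j l \<ge> 0" and hs: "\<And>j. h j summable_on UNIV"
  shows "(\<Sum>(m,j)\<in>Q. h j (k - m)) \<le> (\<Sum>j\<in>UNIV. infsum (h j) UNIV)"
proof -
  have "(\<Sum>(m,j)\<in>Q. h j (k - m)) \<le> (\<Sum>(m,j)\<in>fst ` Q \<times> UNIV. h j (k - m))"
    using Q by (intro sum_mono2) (auto simp: h0 split: prod.splits intro: rev_image_eqI)
  also have "\<dots> = (\<Sum>m\<in>fst ` Q. \<Sum>j\<in>UNIV. h j (k - m))"
    by (simp add: sum.cartesian_product)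
  also have "\<dots> = (\<Sum>j\<in>UNIV. \<Sum>m\<in>fst ` Q. h j (k - m))" by (rule sum.swap)
  also have "\<dots> \<le> (\<Sum>j\<in>UNIV. infsum (h j) UNIV)"
  proof (intro sum_mono)
    fix j
    have "(\<Sum>m\<in>fst ` Q. h j (k - m)) = (\<Sum>l\<in>(\<lambda>m. k - m) ` fst ` Q. h j l)"
      by (subst sum.reindex) (auto simp: inj_on_def)
    also have "\<dots> \<le> infsum (h j) UNIV"
      using Q by (intro finite_sum_le_infsum hs) (auto simp: h0)
    finally show "(\<Sum>m\<in>fst ` Q. h j (k - m)) \<le> infsum (h j) UNIV" .
  qed
  finally show ?thesis .
qed

lemma col_sum:
  fixes \<phi> :: "int \<Rightarrow> real" and P :: "(int \<times> 'n::finite) set"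
  assumes P: "finite P" and h0: "\<And>k. \<phi> k \<ge> 0"
  shows "(\<Sum>(k,i)\<in>P. \<phi> k) \<le> real CARD('n) * (\<Sum>k\<in>fst ` P. \<phi> k)"
proof -
  have "(\<Sum>(k,i)\<in>P. \<phi> k) \<le> (\<Sum>(k,i)\<in>fst ` P \<times> (UNIV::'n set). \<phi> k)"
    apply (rule sum_mono2)
    using P by (auto simp: h0 split: prod.splits intro: rev_image_eqI)
  also have "\<dots> = real CARD('n) * (\<Sum>k\<in>fst ` P. \<phi> k)"
    by (simp add: sum.cartesian_product[symmetric] sum_distrib_left mult.commute)
  finally show ?thesis .
qed




lemma key_ineq:
  fixes k m :: int
  assumes "\<bar>k\<bar> \<le> int J" "\<bar>m\<bar> > int J"
  shows "(real J + 1)^2 \<le> 2 * ((1 + (real_of_int k)^2) * (1 + (real_of_int (k - m))^2))"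
proof -
  have "int J + 1 \<le> \<bar>k\<bar> + \<bar>k - m\<bar>" using assms by linarith
  hence a: "real J + 1 \<le> \<bar>real_of_int k\<bar> + \<bar>real_of_int (k - m)\<bar>"
    by (metis of_int_abs of_int_add of_int_le_iff of_int_of_nat_eq of_int_1)
  have sq: "(x + y)^2 \<le> 2 * (x^2 + y^2)" for x y :: real
  proof -
    have "0 \<le> (x - y)^2" by simp
    thus ?thesis by (simp add: power2_eq_square algebra_simps)
  qed
  have "(real J + 1)^2 \<le> (\<bar>real_of_int k\<bar> + \<bar>real_of_int (k - m)\<bar>)^2"
    using a by (intro power_mono) auto
  also have "\<dots> \<le> 2 * ((real_of_int k)^2 + (real_of_int (k - m))^2)"
    using sq[of "\<bar>real_of_int k\<bar>" "\<bar>real_of_int (k - m)\<bar>"] by simp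
  also have "\<dots> \<le> 2 * ((1 + (real_of_int k)^2) * (1 + (real_of_int (k - m))^2))"
    by (simp add: algebra_simps)
  finally show ?thesis .
qed

lemma det2_fin_restrict:
  assumes G: "finite G" and FG: "F \<subseteq> G"
  shows "det2_fin G (\<lambda>p q. if p \<in> F \<and> q \<in> F then M p q else 0) = det2_fin F M"
proof -
  define B where "B = (\<lambda>i j. (if i = j then 1 else 0) + (if i \<in> F \<and> j \<in> F then M i j else (0::complex)))"
  have F: "finite F" using G FG finite_subset by blast
  have "det_fin G B = det_fin F (\<lambda>i j. (if i = j then 1 else 0) + M i j)"
    unfolding det_fin_def
  proof (rule sum.mono_neutral_cong_right)
    show "finite {p. p permutes G}" using G by (rule finite_permutations)
    show "{p. p permutes F} \<subseteq> {p. p permutes G}" using FG by (auto intro: permutes_subset)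
    show "\<forall>p \<in> {p. p permutes G} - {p. p permutes F}. of_int (sign p) * (\<Prod>i\<in>G. B i (p i)) = 0"
    proof
      fix p assume p: "p \<in> {p. p permutes G} - {p. p permutes F}"
      have pG: "p permutes G" and npF: "\<not> p permutes F" using p by auto
      have "\<exists>x. x \<notin> F \<and> p x \<noteq> x"
      proof (rule ccontr)
        assume "\<not> ?thesis"
        hence "\<forall>x. x \<notin> F \<longrightarrow> p x = x" by blast
        moreover have "\<forall>y. \<exists>!x. p x = y" using pG by (simp add: permutes_def)
        ultimately have "p permutes F" by (simp add: permutes_def)
        with npF show False by simp
      qed
      then obtain x where x: "x \<notin> F" "p x \<noteq> x" by blast
      have xG: "x \<in> G" using x(2) pG by (meson permutes_not_in)
      have "B x (p x) = 0" using x by (simp add: B_def)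
      hence "(\<Prod>i\<in>G. B i (p i)) = 0" using xG G by (meson prod_zero_iff)
      thus "of_int (sign p) * (\<Prod>i\<in>G. B i (p i)) = 0" by simp
    qed
    show "of_int (sign p) * (\<Prod>i\<in>G. B i (p i)) = of_int (sign p) * (\<Prod>i\<in>F. (if i = p i then 1 else 0) + M i (p i))"
      if p: "p \<in> {p. p permutes F}" for p
    proof -
      have pF: "p permutes F" using p by simp
      have "(\<Prod>i\<in>G. B i (p i)) = (\<Prod>i\<in>F. B i (p i)) * (\<Prod>i\<in>G - F. B i (p i))"
        using G FG by (metis prod.subset_diff mult.commute)
      also have "(\<Prod>i\<in>G - F. B i (p i)) = 1"
        using pF by (intro prod.neutral) (auto simp: B_def permutes_not_in)
      also have "(\<Prod>i\<in>F. B i (p i)) = (\<Prod>i\<in>F. (if i = p i then 1 else 0) + M i (p i))"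
        using pF by (intro prod.cong) (auto simp: B_def permutes_in_image)
      finally show ?thesis by simp
    qed
  qed
  moreover have "(\<Sum>i\<in>G. if i \<in> F \<and> i \<in> F then M i i else 0) = (\<Sum>i\<in>F. M i i)"
    using G FG by (simp add: sum.If_cases Int_absorb1)
  ultimately show ?thesis unfolding det2_fin_def B_def by simp
qed

lemma finite_trunc: "finite (trunc_idx J :: (int \<times> 'n::finite) set)"
proof -
  have "(trunc_idx J :: (int \<times> 'n) set) = {- int J..int J} \<times> UNIV" by (auto simp: trunc_idx_def)
  thus ?thesis by simp
qed

lemma trunc_mono: "J \<le> J' \<Longrightarrow> trunc_idx J \<subseteq> trunc_idx J'"
  by (auto simp: trunc_idx_def)

lemma trunc_union: "(\<Union>J. trunc_idx J) = UNIV"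
proof -
  have "x \<in> trunc_idx (nat \<bar>fst x\<bar>)" for x :: "int \<times> 'a" by (cases x) (auto simp: trunc_idx_def)
  thus ?thesis by blast
qed

lemma eventually_contained:
  assumes "finite A" "A \<subseteq> (\<Union>j. F j)" "incseq F"
  shows "\<exists>j0. \<forall>j\<ge>j0. A \<subseteq> F j"
  using assms(1,2)
proof (induction A rule: finite_induct)
  case empty thus ?case by simp
next
  case (insert x A)
  then obtain j1 where j1: "\<forall>j\<ge>j1. A \<subseteq> F j" by auto
  from insert.prems obtain jx where jx: "x \<in> F jx" by auto
  have "\<forall>j\<ge>max j1 jx. insert x A \<subseteq> F j"
    using j1 jx assms(3) by (auto simp: incseq_def) (meson max.boundedE subsetD)
  thus ?case by blast
qed

context
  fixes M :: "(int \<times> 'n::finite) \<Rightarrow> (int \<times> 'n) \<Rightarrow> complex"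
    and g :: "'n \<Rightarrow> 'n \<Rightarrow> int \<Rightarrow> real" and C0 :: real
  assumes g0: "\<And>i j l. g i j l \<ge> 0"
    and gs: "\<And>i j. (\<lambda>l. (1 + (real_of_int l)^2) * g i j l) summable_on UNIV"
    and C0: "C0 \<ge> 0"
    and Bnd: "\<And>k i m j. (cmod (M (k,i) (m,j)))^2 \<le>
        C0 / (1 + (real_of_int k)^2) * (g i j (k - m) + (if k = m \<and> i = j then 1 else 0))"
begin

definition "wfn i j = (\<lambda>l. (1 + (real_of_int l)^2) * g i j l)"
definition "Wt = (\<Sum>i\<in>UNIV. \<Sum>j\<in>UNIV. infsum (wfn i j) UNIV)"

lemma wfn0: "wfn i j l \<ge> 0" unfolding wfn_def by (simp add: g0)

lemma g_le_wfn: "g i j l \<le> wfn i j l"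
  unfolding wfn_def using g0[of i j l] by (simp add: mult_le_cancel_right1)

lemma g_summable: "g i j summable_on UNIV"
  by (rule summable_on_comparison_test[OF gs[of i j]]) (auto simp: g0 g_le_wfn[unfolded wfn_def])

lemma Wt_ge: "(\<Sum>j\<in>UNIV. infsum (wfn i j) UNIV) \<le> Wt"
  unfolding Wt_def
  by (rule member_le_sum) (auto intro!: sum_nonneg infsum_nonneg simp: wfn0)

lemma Wt0: "Wt \<ge> 0" unfolding Wt_def by (auto intro!: sum_nonneg infsum_nonneg simp: wfn0)

lemma gsum_le: "(\<Sum>j\<in>UNIV. infsum (g i j) UNIV) \<le> Wt"
proof -
  have "(\<Sum>j\<in>UNIV. infsum (g i j) UNIV) \<le> (\<Sum>j\<in>UNIV. infsum (wfn i j) UNIV)"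
    by (intro sum_mono infsum_mono g_summable g_le_wfn) (auto simp: gs wfn_def[abs_def])
  with Wt_ge[of i] show ?thesis by linarith
qed

lemma rowb:
  assumes Q: "finite Q"
  shows "(\<Sum>q\<in>Q. (cmod (M (k,i) q))^2) \<le> C0 * (Wt + 1) / (1 + (real_of_int k)^2)"
proof -
  have "(\<Sum>q\<in>Q. (cmod (M (k,i) q))^2) \<le>
     (\<Sum>(m,j)\<in>Q. C0 / (1 + (real_of_int k)^2) * (g i j (k - m) + (if k = m \<and> i = j then 1 else 0)))"
  proof (intro sum_mono)
    fix q show "(cmod (M (k,i) q))^2 \<le> (\<lambda>(m,j). C0 / (1 + (real_of_int k)^2) * (g i j (k - m) + (if k = m \<and> i = j then 1 else 0))) q"
      by (cases q) (simp only: prod.case, rule Bnd)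
  qed
  also have "\<dots> = C0 / (1 + (real_of_int k)^2) * ((\<Sum>(m,j)\<in>Q. g i j (k - m)) + (\<Sum>q\<in>Q. if q = (k,i) then 1 else 0))"
  proof -
    have "(\<Sum>(m,j)\<in>Q. C0 / (1 + (real_of_int k)^2) * (g i j (k - m) + (if k = m \<and> i = j then 1 else 0))) =
      (\<Sum>q\<in>Q. C0 / (1 + (real_of_int k)^2) * (\<lambda>(m,j). g i j (k - m)) q + C0 / (1 + (real_of_int k)^2) * (if q = (k,i) then 1 else 0))"
      by (intro sum.cong refl) (auto simp: algebra_simps split: if_splits)
    also have "\<dots> = C0 / (1 + (real_of_int k)^2) * ((\<Sum>(m,j)\<in>Q. g i j (k - m)) + (\<Sum>q\<in>Q. if q = (k,i) then 1 else 0))"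
      by (simp only: sum.distrib sum_distrib_left[symmetric] distrib_left)
    finally show ?thesis .
  qed
  also have "\<dots> \<le> C0 / (1 + (real_of_int k)^2) * (Wt + 1)"
  proof (intro mult_left_mono add_mono)
    show "(\<Sum>(m,j)\<in>Q. g i j (k - m)) \<le> Wt"
      using row_sum[OF Q, of "g i" k] g0 g_summable gsum_le[of i] by (meson order.trans)
    show "(\<Sum>q\<in>Q. if q = (k,i) then 1 else 0) \<le> (1::real)"
      using Q by (simp add: sum.delta)
  qed (use C0 in auto)
  finally show ?thesis by simp
qed

lemma hs_total:
  assumes G: "finite G"
  shows "hs G M \<le> real CARD('n) * C0 * (Wt + 1) * 5"
proof -
  have "hs G M = (\<Sum>p\<in>G. \<Sum>q\<in>G. (cmod (M p q))^2)" unfolding hs_def by (rule sum.swap)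
  also have "\<dots> \<le> (\<Sum>(k,i)\<in>G. C0 * (Wt + 1) / (1 + (real_of_int k)^2))"
    by (intro sum_mono) (auto simp: rowb G split: prod.splits)
  also have "\<dots> \<le> real CARD('n) * (\<Sum>k\<in>fst ` G. C0 * (Wt + 1) / (1 + (real_of_int k)^2))"
    by (rule col_sum[OF G]) (use C0 Wt0 in auto)
  also have "(\<Sum>k\<in>fst ` G. C0 * (Wt + 1) / (1 + (real_of_int k)^2)) = C0 * (Wt + 1) * (\<Sum>k\<in>fst ` G. 1 / (1 + (real_of_int k)^2))"
    by (simp add: sum_distrib_left)
  also have "\<dots> \<le> C0 * (Wt + 1) * 5"
    using G C0 Wt0 by (intro mult_left_mono sum_inv_sq_all) auto
  finally show ?thesis by (simp add: mult.assoc)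
qed

lemma entry_off:
  assumes "\<bar>k\<bar> \<le> int J" "\<bar>m\<bar> > int J"
  shows "(cmod (M (k,i) (m,j)))^2 \<le> 2 * C0 / (real J + 1)^2 * wfn i j (k - m)"
proof -
  have km: "k \<noteq> m" using assms by auto
  have p1: "1 + (real_of_int k)^2 > 0" "1 + (real_of_int (k - m))^2 > 0" by (auto intro: add_pos_nonneg)
  have "(cmod (M (k,i) (m,j)))^2 \<le> C0 / (1 + (real_of_int k)^2) * g i j (k - m)"
    using Bnd[of k i m j] km by simp
  also have "\<dots> = C0 * wfn i j (k - m) / ((1 + (real_of_int k)^2) * (1 + (real_of_int (k - m))^2))"
  proof -
    have e: "c / a * d = c * (b * d) / (a * b)" if "a > 0" "b > 0" for a b c d :: real
      using that by (simp add: field_simps)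
    show ?thesis unfolding wfn_def by (rule e[OF p1])
  qed
  also have "\<dots> \<le> C0 * wfn i j (k - m) / ((real J + 1)^2 / 2)"
    using key_ineq[OF assms] p1 C0 wfn0[of i j "k - m"]
    by (intro divide_left_mono mult_nonneg_nonneg) (auto intro!: mult_pos_pos)
  also have "\<dots> = 2 * C0 / (real J + 1)^2 * wfn i j (k - m)" by (simp add: field_simps)
  finally show ?thesis .
qed

lemma inner_bound:
  assumes G: "finite G" and T: "T = trunc_idx J"
  shows "(\<Sum>q\<in>G. if (k,i) \<in> T \<and> q \<in> T then 0 else (cmod (M (k,i) q))^2) \<le>
     (if \<bar>k\<bar> > int J then C0 * (Wt + 1) / (1 + (real_of_int k)^2) else 2 * C0 * Wt / (real J + 1)^2)"
proof (cases "\<bar>k\<bar> > int J")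
  case True
  hence "(k,i) \<notin> T" by (simp add: T trunc_idx_def)
  hence "(\<Sum>q\<in>G. if (k,i) \<in> T \<and> q \<in> T then 0 else (cmod (M (k,i) q))^2) = (\<Sum>q\<in>G. (cmod (M (k,i) q))^2)"
    by simp
  also have "\<dots> \<le> C0 * (Wt + 1) / (1 + (real_of_int k)^2)" by (rule rowb[OF G])
  finally show ?thesis using True by simp
next
  case False
  hence kT: "(k,i) \<in> T" by (simp add: T trunc_idx_def)
  have "(\<Sum>q\<in>G. if (k,i) \<in> T \<and> q \<in> T then 0 else (cmod (M (k,i) q))^2) \<le>
      (\<Sum>(m,j)\<in>G. 2 * C0 / (real J + 1)^2 * wfn i j (k - m))"
  proof (intro sum_mono)
    fix q assume "q \<in> G"
    obtain m j where q: "q = (m,j)" by (cases q)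
    show "(if (k,i) \<in> T \<and> q \<in> T then 0 else (cmod (M (k,i) q))^2) \<le> (\<lambda>(m,j). 2 * C0 / (real J + 1)^2 * wfn i j (k - m)) q"
    proof (cases "q \<in> T")
      case True thus ?thesis using kT q C0 wfn0[of i j "k - m"] by simp
    next
      case qT: False
      hence "\<bar>m\<bar> > int J" by (simp add: T trunc_idx_def q)
      thus ?thesis using entry_off[of k J m i j] False qT q by simp
    qed
  qed
  also have "\<dots> = 2 * C0 / (real J + 1)^2 * (\<Sum>(m,j)\<in>G. wfn i j (k - m))"
    by (simp add: sum_distrib_left case_prod_beta)
  also have "\<dots> \<le> 2 * C0 / (real J + 1)^2 * Wt"
  proof (intro mult_left_mono)
    have "(\<Sum>(m,j)\<in>G. wfn i j (k - m)) \<le> (\<Sum>j\<in>UNIV. infsum (wfn i j) UNIV)"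
      by (rule row_sum[OF G]) (simp_all add: wfn0 gs[of i, folded wfn_def])
    thus "(\<Sum>(m,j)\<in>G. wfn i j (k - m)) \<le> Wt" using Wt_ge[of i] by linarith
  qed (use C0 in auto)
  finally show ?thesis using False by simp
qed

lemma tail_bound:
  assumes G: "finite G" and J: "J \<ge> 1"
  shows "(\<Sum>q\<in>G. \<Sum>p\<in>G. if p \<in> trunc_idx J \<and> q \<in> trunc_idx J then 0 else (cmod (M p q))^2)
     \<le> real CARD('n) * (4 * C0 * (Wt + 1) + 4 * C0 * Wt) / real J"
proof -
  define T where "T = (trunc_idx J :: (int \<times> 'n) set)"
  define A where "A = C0 * (Wt + 1)"
  define B where "B = 2 * C0 * Wt / (real J + 1)^2"
  have A0: "A \<ge> 0" "B \<ge> 0" using C0 Wt0 by (auto simp: A_def B_def)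
  define \<phi> where "\<phi> k = (if \<bar>k\<bar> > int J then A / (1 + (real_of_int k)^2) else B)" for k
  have \<phi>0: "\<phi> k \<ge> 0" for k using A0 by (simp add: \<phi>_def)
  have "(\<Sum>q\<in>G. \<Sum>p\<in>G. if p \<in> T \<and> q \<in> T then 0 else (cmod (M p q))^2) =
        (\<Sum>p\<in>G. \<Sum>q\<in>G. if p \<in> T \<and> q \<in> T then 0 else (cmod (M p q))^2)" by (rule sum.swap)
  also have "\<dots> \<le> (\<Sum>(k,i)\<in>G. \<phi> k)"
  proof (intro sum_mono)
    fix p assume "p \<in> G"
    obtain k i where p: "p = (k,i)" by (cases p)
    show "(\<Sum>q\<in>G. if p \<in> T \<and> q \<in> T then 0 else (cmod (M p q))^2) \<le> (\<lambda>(k,i). \<phi> k) p"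
      unfolding p using inner_bound[OF G T_def, of k i] by (auto simp: \<phi>_def A_def B_def split: if_splits)
  qed
  also have "\<dots> \<le> real CARD('n) * (\<Sum>k\<in>fst ` G. \<phi> k)" by (rule col_sum[OF G \<phi>0])
  also have "(\<Sum>k\<in>fst ` G. \<phi> k) \<le> 4 * A / (real J + 1) + B * (2 * real J + 1)"
  proof -
    have fG: "finite (fst ` G)" using G by simp
    have "(\<Sum>k\<in>fst ` G. \<phi> k) = (\<Sum>k\<in>{k\<in>fst ` G. \<bar>k\<bar> > int J}. \<phi> k) + (\<Sum>k\<in>{k\<in>fst ` G. \<not> \<bar>k\<bar> > int J}. \<phi> k)"
    proof -
      have "(\<Sum>k\<in>{k\<in>fst ` G. \<bar>k\<bar> > int J} \<union> {k\<in>fst ` G. \<not> \<bar>k\<bar> > int J}. \<phi> k) =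
        (\<Sum>k\<in>{k\<in>fst ` G. \<bar>k\<bar> > int J}. \<phi> k) + (\<Sum>k\<in>{k\<in>fst ` G. \<not> \<bar>k\<bar> > int J}. \<phi> k)"
        by (rule sum.union_disjoint) (use fG in auto)
      moreover have "{k\<in>fst ` G. \<bar>k\<bar> > int J} \<union> {k\<in>fst ` G. \<not> \<bar>k\<bar> > int J} = fst ` G" by blast
      ultimately show ?thesis by simp
    qed
    also have "(\<Sum>k\<in>{k\<in>fst ` G. \<bar>k\<bar> > int J}. \<phi> k) = A * (\<Sum>k\<in>{k\<in>fst ` G. \<bar>k\<bar> > int J}. 1 / (1 + (real_of_int k)^2))"
      by (simp add: \<phi>_def sum_distrib_left)
    also have "\<dots> \<le> A * (4 / (real J + 1))"
    proof (rule mult_left_mono)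
      show "(\<Sum>k\<in>{k\<in>fst ` G. \<bar>k\<bar> > int J}. 1 / (1 + (real_of_int k)^2)) \<le> 4 / (real J + 1)"
        by (rule sum_inv_sq_int) (use fG in auto)
    qed (use A0 in auto)
    also have "(\<Sum>k\<in>{k\<in>fst ` G. \<not> \<bar>k\<bar> > int J}. \<phi> k) = (\<Sum>k\<in>{k\<in>fst ` G. \<not> \<bar>k\<bar> > int J}. B)"
      by (intro sum.cong) (auto simp: \<phi>_def)
    also have "\<dots> \<le> (\<Sum>k\<in>{- int J..int J}. B)"
      using A0 by (intro sum_mono2) auto
    also have "\<dots> = B * (2 * real J + 1)" by simp
    finally show ?thesis by (simp add: mult.commute)
  qed
  also have "real CARD('n) * (4 * A / (real J + 1) + B * (2 * real J + 1)) \<le>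
             real CARD('n) * (4 * C0 * (Wt + 1) + 4 * C0 * Wt) / real J"
  proof -
    have J1: "real J \<ge> 1" using J by simp
    have a: "4 * A / (real J + 1) \<le> 4 * A / real J"
      using A0 J1 by (intro divide_left_mono) auto
    have "B * (2 * real J + 1) = 2 * C0 * Wt * (2 * real J + 1) / (real J + 1)^2" by (simp add: B_def)
    also have "\<dots> \<le> 2 * C0 * Wt * (2 * (real J + 1)) / (real J + 1)^2"
      using C0 Wt0 by (intro divide_right_mono mult_left_mono) auto
    also have "\<dots> = 4 * C0 * Wt / (real J + 1)"
    proof -
      have e: "2 * c * (2 * x) / x^2 = 4 * c / x" if "x > 0" for c x :: real
        using that by (simp add: power2_eq_square field_simps)
      show ?thesis using e[of "real J + 1" "C0 * Wt"] by (simp add: mult.assoc)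
    qed
    also have "\<dots> \<le> 4 * C0 * Wt / real J" using C0 Wt0 J1 by (intro divide_left_mono) auto
    finally have b: "B * (2 * real J + 1) \<le> 4 * C0 * Wt / real J" .
    have "4 * A / (real J + 1) + B * (2 * real J + 1) \<le> (4 * C0 * (Wt + 1) + 4 * C0 * Wt) / real J"
      using a b by (simp add: A_def add_divide_distrib)
    thus ?thesis by (metis (no_types) mult_left_mono of_nat_0_le_iff times_divide_eq_right)
  qed
  finally show ?thesis using T_def by (simp add: mult_left_mono)
qed

definition "Htot = real CARD('n) * C0 * (Wt + 1) * 5"
definition "Lam = exp ((3 * sqrt Htot + 1)^2 / 2)"
definition "Ct = real CARD('n) * (4 * C0 * (Wt + 1) + 4 * C0 * Wt)"

lemma Ct0: "Ct \<ge> 0" unfolding Ct_def using C0 Wt0 by simp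

lemma compare:
  assumes G: "finite G" and FG: "F \<subseteq> G" and TF: "trunc_idx J \<subseteq> F" and J: "J \<ge> 1"
  shows "cmod (det2_fin F M - det2_fin G M) \<le> Lam * sqrt (Ct / real J)"
proof -
  define MF where "MF = (\<lambda>p q. if p \<in> F \<and> q \<in> F then M p q else 0)"
  have e: "det2_fin F M = det2_fin G MF" unfolding MF_def by (rule det2_fin_restrict[OF G FG, symmetric])
  have hM: "hs G M \<le> Htot" unfolding Htot_def by (rule hs_total[OF G])
  have hMF: "hs G MF \<le> hs G M" unfolding hs_def MF_def by (intro sum_mono) auto
  have "cmod (det2_fin G MF - det2_fin G M) \<le> exp ((3 * sqrt Htot + 1)^2 / 2) * sqrt (hs G (\<lambda>p q. MF p q - M p q))"
    using hM hMF by (intro det2_lip G) auto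
  also have "hs G (\<lambda>p q. MF p q - M p q) \<le> Ct / real J"
  proof -
    have "hs G (\<lambda>p q. MF p q - M p q) \<le> (\<Sum>q\<in>G. \<Sum>p\<in>G. if p \<in> trunc_idx J \<and> q \<in> trunc_idx J then 0 else (cmod (M p q))^2)"
      unfolding hs_def MF_def using TF by (intro sum_mono) auto
    also have "\<dots> \<le> Ct / real J" unfolding Ct_def by (rule tail_bound[OF G J])
    finally show ?thesis .
  qed
  hence "sqrt (hs G (\<lambda>p q. MF p q - M p q)) \<le> sqrt (Ct / real J)" by simp
  hence "exp ((3 * sqrt Htot + 1)^2 / 2) * sqrt (hs G (\<lambda>p q. MF p q - M p q)) \<le> Lam * sqrt (Ct / real J)"
    unfolding Lam_def by (intro mult_left_mono) auto
  finally show ?thesis using e by simp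
qed

lemma bound_tendsto: "(\<lambda>J. Lam * sqrt (Ct / real J)) \<longlonglongrightarrow> 0"
proof -
  have "(\<lambda>J. Ct / real J) \<longlonglongrightarrow> 0" by (rule lim_const_over_n)
  hence "(\<lambda>J. sqrt (Ct / real J)) \<longlonglongrightarrow> sqrt 0" by (rule tendsto_real_sqrt)
  hence "(\<lambda>J. Lam * sqrt (Ct / real J)) \<longlonglongrightarrow> Lam * sqrt 0" by (intro tendsto_mult tendsto_const)
  thus ?thesis by simp
qed

lemma small_bound: "e > 0 \<Longrightarrow> \<exists>N\<ge>1. \<forall>J\<ge>N. Lam * sqrt (Ct / real J) < e"
proof -
  assume e: "e > 0"
  from bound_tendsto have "eventually (\<lambda>J. dist (Lam * sqrt (Ct / real J)) 0 < e) sequentially"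
    using e by (rule tendstoD)
  then obtain N where N: "\<forall>J\<ge>N. dist (Lam * sqrt (Ct / real J)) 0 < e" by (auto simp: eventually_sequentially)
  have "\<forall>J\<ge>max N 1. Lam * sqrt (Ct / real J) < e"
  proof (intro allI impI)
    fix J assume "J \<ge> max N 1"
    hence "dist (Lam * sqrt (Ct / real J)) 0 < e" using N by auto
    thus "Lam * sqrt (Ct / real J) < e" by (simp add: dist_real_def)
  qed
  thus ?thesis by (intro exI[of _ "max N 1"]) auto
qed

lemma conv:
  "\<forall>J\<ge>1. cmod (det2_fin (trunc_idx J) M - det2 UNIV M) \<le> Lam * sqrt (Ct / real J)"
proof -
  define d where "d J = det2_fin (trunc_idx J) M" for J
  have dd: "cmod (d J - d J') \<le> Lam * sqrt (Ct / real J)" if "J \<ge> 1" "J \<le> J'" for J J'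
    unfolding d_def by (rule compare) (use that in \<open>auto simp: finite_trunc trunc_mono\<close>)
  have "Cauchy d"
  proof (rule metric_CauchyI)
    fix e :: real assume e: "e > 0"
    obtain N where N: "N \<ge> 1" "\<forall>J\<ge>N. Lam * sqrt (Ct / real J) < e" using small_bound[OF e] by auto
    show "\<exists>N. \<forall>m\<ge>N. \<forall>n\<ge>N. dist (d m) (d n) < e"
    proof (intro exI allI impI)
      fix m n assume mn: "m \<ge> N" "n \<ge> N"
      show "dist (d m) (d n) < e"
      proof (cases "m \<le> n")
        case True
        thus ?thesis using dd[of m n] N mn by (simp add: dist_norm) (meson order.strict_trans1)
      next
        case False
        thus ?thesis using dd[of n m] N mn by (simp add: dist_norm norm_minus_commute) (meson order.strict_trans1 nat_le_linear)
      qed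
    qed
  qed
  then obtain L where L: "d \<longlonglongrightarrow> L" using Cauchy_convergent_iff convergent_def by blast
  have dL: "cmod (d J - L) \<le> Lam * sqrt (Ct / real J)" if J: "J \<ge> 1" for J
  proof (rule LIMSEQ_le_const2)
    show "(\<lambda>J'. cmod (d J - d J')) \<longlonglongrightarrow> cmod (d J - L)"
      by (intro tendsto_norm tendsto_diff tendsto_const L)
    show "\<exists>N. \<forall>n\<ge>N. cmod (d J - d n) \<le> Lam * sqrt (Ct / real J)"
      using dd J by blast
  qed
  have limF: "(\<lambda>j. det2_fin (F j) M) \<longlonglongrightarrow> L"
    if F: "(\<forall>j. finite (F j) \<and> F j \<subseteq> UNIV) \<and> incseq F \<and> (\<Union>j. F j) = UNIV" for F :: "nat \<Rightarrow> (int \<times> 'n) set"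
  proof (rule LIMSEQ_I)
    fix r :: real assume r: "r > 0"
    obtain J where J: "J \<ge> 1" "Lam * sqrt (Ct / real J) < r / 2"
      using small_bound[of "r / 2"] r by auto
    obtain j0 where j0: "\<forall>j\<ge>j0. trunc_idx J \<subseteq> F j"
      using eventually_contained[of "trunc_idx J" F] F finite_trunc by auto
    show "\<exists>no. \<forall>n\<ge>no. cmod (det2_fin (F n) M - L) < r"
    proof (intro exI allI impI)
      fix n assume n: "n \<ge> j0"
      have "cmod (d J - det2_fin (F n) M) \<le> Lam * sqrt (Ct / real J)"
        unfolding d_def by (rule compare) (use F j0 n J in auto)
      hence "cmod (det2_fin (F n) M - L) \<le> Lam * sqrt (Ct / real J) + Lam * sqrt (Ct / real J)"
        using dL[OF J(1)] norm_triangle_ineq[of "det2_fin (F n) M - d J" "d J - L"]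
        by (simp add: norm_minus_commute)
      thus "cmod (det2_fin (F n) M - L) < r" using J by linarith
    qed
  qed
  have "det2 UNIV M = L"
    unfolding det2_def
  proof (rule the_equality)
    show "\<forall>F. (\<forall>j. finite (F j) \<and> F j \<subseteq> UNIV) \<and> incseq F \<and> (\<Union>j. F j) = UNIV \<longrightarrow> (\<lambda>j. det2_fin (F j) M) \<longlonglongrightarrow> L"
      using limF by blast
    fix L' assume L': "\<forall>F. (\<forall>j. finite (F j) \<and> F j \<subseteq> UNIV) \<and> incseq F \<and> (\<Union>j. F j) = UNIV \<longrightarrow> (\<lambda>j. det2_fin (F j) M) \<longlonglongrightarrow> L'"
    have "(\<lambda>j. det2_fin (trunc_idx j) M) \<longlonglongrightarrow> L'"
      using L'[rule_format, of trunc_idx] by (auto simp: finite_trunc incseq_def trunc_mono trunc_union)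
    thus "L' = L" using L unfolding d_def by (rule LIMSEQ_unique)
  qed
  thus ?thesis using dL unfolding d_def by auto
qed

end



lemma sq2: "(x + y)^2 \<le> 2 * (x^2 + y^2)" for x y :: real
proof -
  have "0 \<le> (x - y)^2" by simp
  thus ?thesis by (simp add: power2_eq_square algebra_simps)
qed

lemma sq3: "(x + y + z)^2 \<le> 3 * (x^2 + y^2 + z^2)" for x y z :: real
proof -
  have "0 \<le> (x - y)^2 + (y - z)^2 + (x - z)^2" by simp
  thus ?thesis by (simp add: power2_eq_square algebra_simps)
qed

lemma L1:
  fixes xk :: real and A1 A0 :: complex
  shows "(cmod (- ((\<i> * complex_of_real xk) / (1 + (complex_of_real xk)\<^sup>2)) * A1 - (1 / (1 + (complex_of_real xk)\<^sup>2)) * A0))^2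
     \<le> 2 / (1 + xk^2) * ((cmod A1)^2 + (cmod A0)^2)"
proof -
  define D where "D = 1 + xk^2"
  have D1: "D \<ge> 1" unfolding D_def by simp
  have Dc: "1 + (complex_of_real xk)\<^sup>2 = complex_of_real D" unfolding D_def by simp
  define a where "a = \<bar>xk\<bar> / D"
  define b where "b = 1 / D"
  have na: "cmod ((\<i> * complex_of_real xk) / (1 + (complex_of_real xk)\<^sup>2)) = a"
    unfolding Dc a_def using D1 by (simp add: norm_divide norm_mult)
  have nb: "cmod (1 / (1 + (complex_of_real xk)\<^sup>2)) = b"
    unfolding Dc b_def using D1 by (simp add: norm_divide)
  have "cmod (- ((\<i> * complex_of_real xk) / (1 + (complex_of_real xk)\<^sup>2)) * A1 - (1 / (1 + (complex_of_real xk)\<^sup>2)) * A0)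
      \<le> a * cmod A1 + b * cmod A0"
    by (metis na nb norm_minus_cancel norm_mult norm_triangle_ineq4 order.trans order.refl
        add_mono mult_minus_left)
  hence "(cmod (- ((\<i> * complex_of_real xk) / (1 + (complex_of_real xk)\<^sup>2)) * A1 - (1 / (1 + (complex_of_real xk)\<^sup>2)) * A0))^2
      \<le> (a * cmod A1 + b * cmod A0)^2" by (intro power_mono) auto
  also have "\<dots> \<le> 2 * ((a * cmod A1)^2 + (b * cmod A0)^2)" by (rule sq2)
  also have "\<dots> = 2 * (a^2 * (cmod A1)^2 + b^2 * (cmod A0)^2)" by (simp add: power_mult_distrib)
  also have "\<dots> \<le> 2 * (1 / D * (cmod A1)^2 + 1 / D * (cmod A0)^2)"
  proof -
    have "a^2 = xk^2 / D^2" unfolding a_def by (simp add: power_divide)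
    also have "\<dots> \<le> D / D^2" using D1 by (intro divide_right_mono) (auto simp: D_def)
    also have "\<dots> = 1 / D" using D1 by (simp add: power2_eq_square)
    finally have a2: "a^2 \<le> 1 / D" .
    have "b^2 = 1 / D * (1 / D)" unfolding b_def by (simp add: power2_eq_square)
    also have "\<dots> \<le> 1 / D * 1" using D1 by (intro mult_left_mono) auto
    finally have b2: "b^2 \<le> 1 / D" by simp
    show ?thesis using a2 b2 by (intro mult_left_mono add_mono mult_right_mono) auto
  qed
  also have "\<dots> = 2 / (1 + xk^2) * ((cmod A1)^2 + (cmod A0)^2)"
    unfolding D_def by (simp add: add_divide_distrib algebra_simps)
  finally show ?thesis .
qed

lemma L2:
  fixes b0 b1 lam dl :: complex and \<sigma> R :: real
  assumes dl: "dl = 0 \<or> dl = 1" and lam: "cmod lam \<le> R" and s0: "0 \<le> \<sigma>" and s1: "\<sigma> < 2 * pi"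
  shows "(cmod (b1 + 2 * \<i> * complex_of_real \<sigma> * dl))^2 +
         (cmod (b0 - (complex_of_real \<sigma>)^2 * dl + \<i> * complex_of_real \<sigma> * b1 + (1 - lam) * dl))^2
      \<le> (600 + 3 * (65 + R)^2) * ((cmod b0)^2 + (cmod b1)^2 + cmod dl)"
proof -
  define d where "d = cmod dl"
  define u where "u = cmod b0"
  define v where "v = cmod b1"
  have d: "d = 0 \<or> d = 1" using dl by (auto simp: d_def)
  have dd: "d^2 = d" using d by auto
  have d0: "d \<ge> 0" using d by auto
  have R0: "R \<ge> 0" using lam norm_ge_zero order.trans by blast
  have pi4: "pi \<le> 4" using pi_less_4 by simp
  have s4: "\<sigma> \<le> 8" using s1 pi4 by linarith
  have "cmod (b1 + 2 * \<i> * complex_of_real \<sigma> * dl) \<le> v + 2 * \<sigma> * d"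
    using norm_triangle_ineq[of b1 "2 * \<i> * complex_of_real \<sigma> * dl"] s0
    by (simp add: v_def d_def norm_mult)
  also have "\<dots> \<le> v + 16 * d" using s4 d0 by (intro add_left_mono) (simp add: mult_right_mono)
  finally have nA1: "cmod (b1 + 2 * \<i> * complex_of_real \<sigma> * dl) \<le> v + 16 * d" .
  have "cmod (b0 - (complex_of_real \<sigma>)^2 * dl + \<i> * complex_of_real \<sigma> * b1 + (1 - lam) * dl)
      \<le> cmod b0 + cmod ((complex_of_real \<sigma>)^2 * dl) + cmod (\<i> * complex_of_real \<sigma> * b1) + cmod ((1 - lam) * dl)"
    by (smt (verit) norm_triangle_ineq norm_triangle_ineq4)
  also have "\<dots> \<le> u + 64 * d + 8 * v + (1 + R) * d"
  proof -
    have "cmod ((complex_of_real \<sigma>)^2 * dl) = \<sigma>^2 * d" by (simp add: norm_mult d_def norm_power)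
    also have "\<dots> \<le> 64 * d" using s0 s4 d0 power_mono[of \<sigma> 8 2] by (intro mult_right_mono) auto
    finally have 1: "cmod ((complex_of_real \<sigma>)^2 * dl) \<le> 64 * d" .
    have 2: "cmod (\<i> * complex_of_real \<sigma> * b1) \<le> 8 * v"
      using s0 s4 by (simp add: norm_mult v_def mult_right_mono)
    have "cmod (1 - lam) \<le> 1 + R" using norm_triangle_ineq4[of 1 lam] lam by simp
    hence 3: "cmod ((1 - lam) * dl) \<le> (1 + R) * d" using d0 by (simp add: norm_mult d_def mult_right_mono)
    show ?thesis using 1 2 3 by (simp add: u_def)
  qed
  finally have nA0: "cmod (b0 - (complex_of_real \<sigma>)^2 * dl + \<i> * complex_of_real \<sigma> * b1 + (1 - lam) * dl)
      \<le> u + 8 * v + (65 + R) * d" by (simp add: algebra_simps)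
  have A1sq: "(cmod (b1 + 2 * \<i> * complex_of_real \<sigma> * dl))^2 \<le> 2 * (v^2 + 256 * d)"
  proof -
    have "(cmod (b1 + 2 * \<i> * complex_of_real \<sigma> * dl))^2 \<le> (v + 16 * d)^2" using nA1 by (intro power_mono) auto
    also have "\<dots> \<le> 2 * (v^2 + (16 * d)^2)" by (rule sq2)
    also have "(16 * d)^2 = 256 * d" using dd by (simp add: power_mult_distrib)
    finally show ?thesis .
  qed
  have A0sq: "(cmod (b0 - (complex_of_real \<sigma>)^2 * dl + \<i> * complex_of_real \<sigma> * b1 + (1 - lam) * dl))^2
      \<le> 3 * (u^2 + 64 * v^2 + (65 + R)^2 * d)"
  proof -
    have "(cmod (b0 - (complex_of_real \<sigma>)^2 * dl + \<i> * complex_of_real \<sigma> * b1 + (1 - lam) * dl))^2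
        \<le> (u + 8 * v + (65 + R) * d)^2" using nA0 by (intro power_mono) auto
    also have "\<dots> \<le> 3 * (u^2 + (8 * v)^2 + ((65 + R) * d)^2)" by (rule sq3)
    also have "((65 + R) * d)^2 = (65 + R)^2 * d" using dd by (simp add: power_mult_distrib)
    finally show ?thesis by (simp add: power_mult_distrib)
  qed
  have "2 * (v^2 + 256 * d) + 3 * (u^2 + 64 * v^2 + (65 + R)^2 * d) \<le> (600 + 3 * (65 + R)^2) * (u^2 + v^2 + d)"
    using d0 by (simp add: algebra_simps)
  thus ?thesis using A1sq A0sq by (simp add: u_def v_def d_def)
qed



lemma L3:
  assumes X: "X > 0"
  shows "2 / (1 + (freq X k)^2) \<le> 2 * (1 + X^2) / (1 + (real_of_int k)^2)"
proof -
  have pi1: "pi \<ge> 1" using pi_gt3 by linarith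
  have "(real_of_int k)^2 \<le> (1 + X^2) * (freq X k)^2"
  proof -
    have "(freq X k)^2 = (2 * pi)^2 * (real_of_int k)^2 / X^2"
      unfolding freq_def by (simp add: power_divide power_mult_distrib)
    hence "(1 + X^2) * (freq X k)^2 = (2 * pi)^2 * (real_of_int k)^2 * ((1 + X^2) / X^2)" by simp
    also have "\<dots> \<ge> 1 * (real_of_int k)^2 * 1"
    proof (intro mult_mono)
      show "1 \<le> (2 * pi)^2" using pi1 by (smt (verit) one_le_power)
      show "1 \<le> (1 + X^2) / X^2" using X by simp
    qed auto
    finally show ?thesis by simp
  qed
  hence "1 + (real_of_int k)^2 \<le> (1 + X^2) * (1 + (freq X k)^2)"
    by (simp add: algebra_simps) (smt (verit) zero_le_power2)
  hence "2 / (1 + (freq X k)^2) \<le> 2 * (1 + X^2) / (1 + (real_of_int k)^2)"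
    by (simp add: field_simps add_pos_nonneg)
  thus ?thesis .
qed

lemma ar: "(a::real) / b * (e * s) = a * e / b * s"
  by (simp add: algebra_simps)

lemma Kmat_bnd:
  fixes a0 a1 :: "real \<Rightarrow> complex^'n::finite^'n"
  assumes X: "X > 0" and lam: "cmod lam \<le> R" and s0: "0 \<le> \<sigma>" and s1: "\<sigma> < 2 * pi"
  shows "(cmod (Kmat X a0 a1 \<sigma> lam (k,i) (m,j)))^2 \<le>
     2 * (1 + X^2) * (600 + 3 * (65 + R)^2) / (1 + (real_of_int k)^2) *
     ((cmod (fcoef X (\<lambda>x. vec_nth (vec_nth (a0 x) i) j) (k - m)))^2 + (cmod (fcoef X (\<lambda>x. vec_nth (vec_nth (a1 x) i) j) (k - m)))^2
      + (if k = m \<and> i = j then 1 else 0))"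
proof -
  define xk where "xk = freq X k"
  define dl :: complex where "dl = (if k = m \<and> i = j then 1 else 0)"
  define b0 where "b0 = fcoef X (\<lambda>x. vec_nth (vec_nth (a0 x) i) j) (k - m)"
  define b1 where "b1 = fcoef X (\<lambda>x. vec_nth (vec_nth (a1 x) i) j) (k - m)"
  define E where "E = 600 + 3 * (65 + R)^2"
  have E0: "E \<ge> 0" unfolding E_def by (simp add: add_nonneg_nonneg)
  have K: "Kmat X a0 a1 \<sigma> lam (k,i) (m,j) =
     - ((\<i> * complex_of_real xk) / (1 + (complex_of_real xk)\<^sup>2)) * (b1 + 2 * \<i> * complex_of_real \<sigma> * dl)
     - (1 / (1 + (complex_of_real xk)\<^sup>2)) * (b0 - (complex_of_real \<sigma>)^2 * dl + \<i> * complex_of_real \<sigma> * b1 + (1 - lam) * dl)"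
    unfolding Kmat_def Let_def xk_def dl_def b0_def b1_def prod.case ..
  have dlc: "cmod dl = (if k = m \<and> i = j then 1 else 0)" unfolding dl_def by simp
  have "(cmod (Kmat X a0 a1 \<sigma> lam (k,i) (m,j)))^2 \<le> 2 / (1 + xk^2) *
      ((cmod (b1 + 2 * \<i> * complex_of_real \<sigma> * dl))^2 +
       (cmod (b0 - (complex_of_real \<sigma>)^2 * dl + \<i> * complex_of_real \<sigma> * b1 + (1 - lam) * dl))^2)"
    unfolding K by (rule L1)
  also have "\<dots> \<le> 2 / (1 + xk^2) * (E * ((cmod b0)^2 + (cmod b1)^2 + cmod dl))"
    unfolding E_def by (intro mult_left_mono L2) (auto simp: dl_def lam s0 s1 add_pos_nonneg)
  also have "\<dots> \<le> 2 * (1 + X^2) / (1 + (real_of_int k)^2) * (E * ((cmod b0)^2 + (cmod b1)^2 + cmod dl))"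
    unfolding xk_def using E0 by (intro mult_right_mono L3 X) auto
  also have "\<dots> = 2 * (1 + X^2) * E / (1 + (real_of_int k)^2) * ((cmod b0)^2 + (cmod b1)^2 + cmod dl)"
    by (rule ar)
  finally show ?thesis unfolding E_def b0_def b1_def dlc .
qed

lemma powr_half: "J \<ge> 1 \<Longrightarrow> sqrt (C / real J) = sqrt C * real J powr (-1/2)"
proof -
  assume J: "J \<ge> 1"
  have "real J powr (-1/2) = real J powr (- (1/2))" by simp
  also have "\<dots> = inverse (real J powr (1/2))" by (rule powr_minus)
  also have "real J powr (1/2) = sqrt (real J)" by (rule powr_half_sqrt) simp
  finally have "real J powr (-1/2) = inverse (sqrt (real J))" .
  moreover have "sqrt (C / real J) = sqrt C * inverse (sqrt (real J))"
    by (subst real_sqrt_divide) (rule divide_inverse)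
  ultimately show ?thesis by simp
qed

theorem theorem3p10:
  fixes X :: real and a0 a1 :: "real \<Rightarrow> complex^'n^'n"
  assumes "X > 0" and "H1per X a0" and "H1per X a1"
  shows "\<forall>R>0. \<exists>C>0. \<forall>J::nat. \<forall>lam::complex. \<forall>\<sigma>::real.
           J \<ge> 1 \<and> cmod lam \<le> R \<and> 0 \<le> \<sigma> \<and> \<sigma> < 2 * pi \<longrightarrow>
           cmod (det2_fin (trunc_idx J) (Kmat X a0 a1 \<sigma> lam) - det2 UNIV (Kmat X a0 a1 \<sigma> lam))
             \<le> C * real J powr (-1/2)"
proof (intro allI impI)
  fix R :: real assume R: "R > 0"
  define g where "g i j l = (cmod (fcoef X (\<lambda>x. vec_nth (vec_nth (a0 x) i) j) l))^2 + (cmod (fcoef X (\<lambda>x. vec_nth (vec_nth (a1 x) i) j) l))^2" for i j l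
  define C0 where "C0 = 2 * (1 + X^2) * (600 + 3 * (65 + R)^2)"
  have g0: "\<And>i j l. g i j l \<ge> 0" unfolding g_def by simp
  have gs: "\<And>i j. (\<lambda>l. (1 + (real_of_int l)^2) * g i j l) summable_on UNIV"
  proof -
    fix i j
    have s0: "(\<lambda>l. (1 + (real_of_int l)^2) * (cmod (fcoef X (\<lambda>x. vec_nth (vec_nth (a0 x) i) j) l))^2) summable_on UNIV"
      using assms(2) unfolding H1per_def H1per_scalar_def by blast
    have s1: "(\<lambda>l. (1 + (real_of_int l)^2) * (cmod (fcoef X (\<lambda>x. vec_nth (vec_nth (a1 x) i) j) l))^2) summable_on UNIV"
      using assms(3) unfolding H1per_def H1per_scalar_def by blast
    show "(\<lambda>l. (1 + (real_of_int l)^2) * g i j l) summable_on UNIV"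
      unfolding g_def distrib_left by (rule summable_on_add[OF s0 s1])
  qed
  have C00: "C0 \<ge> 0" unfolding C0_def by (simp add: add_nonneg_nonneg)
  have BndA: "\<And>\<sigma> lam k i m j. cmod lam \<le> R \<Longrightarrow> 0 \<le> \<sigma> \<Longrightarrow> \<sigma> < 2 * pi \<Longrightarrow>
      (cmod (Kmat X a0 a1 \<sigma> lam (k,i) (m,j)))^2 \<le>
        C0 / (1 + (real_of_int k)^2) * (g i j (k - m) + (if k = m \<and> i = j then 1 else 0))"
    unfolding C0_def g_def by (rule Kmat_bnd[OF assms(1)])
  have L0: "Lam g C0 \<ge> 0"
    using Lam_def[of g C0 "Kmat X a0 a1 0 0", OF g0 gs C00 BndA] R by simp
  have Ct0': "Ct g C0 \<ge> 0"
    using Ct0[of g C0 "Kmat X a0 a1 0 0", OF g0 gs C00 BndA] R by simp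
  define Cc where "Cc = Lam g C0 * sqrt (Ct g C0) + 1"
  show "\<exists>C>0. \<forall>J::nat. \<forall>lam::complex. \<forall>\<sigma>::real.
           J \<ge> 1 \<and> cmod lam \<le> R \<and> 0 \<le> \<sigma> \<and> \<sigma> < 2 * pi \<longrightarrow>
           cmod (det2_fin (trunc_idx J) (Kmat X a0 a1 \<sigma> lam) - det2 UNIV (Kmat X a0 a1 \<sigma> lam))
             \<le> C * real J powr (-1/2)"
  proof (intro exI[of _ Cc] conjI allI impI)
    show "Cc > 0" unfolding Cc_def using L0 Ct0' by (simp add: add_nonneg_pos)
    fix J :: nat and lam :: complex and \<sigma> :: real
    assume H: "J \<ge> 1 \<and> cmod lam \<le> R \<and> 0 \<le> \<sigma> \<and> \<sigma> < 2 * pi"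
    have Bnd: "\<And>k i m j. (cmod (Kmat X a0 a1 \<sigma> lam (k,i) (m,j)))^2 \<le>
        C0 / (1 + (real_of_int k)^2) * (g i j (k - m) + (if k = m \<and> i = j then 1 else 0))"
      using BndA H by blast
    have "cmod (det2_fin (trunc_idx J) (Kmat X a0 a1 \<sigma> lam) - det2 UNIV (Kmat X a0 a1 \<sigma> lam))
        \<le> Lam g C0 * sqrt (Ct g C0 / real J)"
    proof -
      have "\<forall>J\<ge>1. cmod (det2_fin (trunc_idx J) (Kmat X a0 a1 \<sigma> lam) - det2 UNIV (Kmat X a0 a1 \<sigma> lam))
        \<le> Lam g C0 * sqrt (Ct g C0 / real J)"
        by (rule conv[of g C0 "Kmat X a0 a1 \<sigma> lam", OF g0 gs C00 Bnd])
      thus ?thesis using H by simp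
    qed
    also have "\<dots> = Lam g C0 * sqrt (Ct g C0) * real J powr (-1/2)" using H by (simp add: powr_half)
    also have "\<dots> \<le> Cc * real J powr (-1/2)" unfolding Cc_def by (intro mult_right_mono) auto
    finally show "cmod (det2_fin (trunc_idx J) (Kmat X a0 a1 \<sigma> lam) - det2 UNIV (Kmat X a0 a1 \<sigma> lam))
             \<le> Cc * real J powr (-1/2)" .
  qed
qed


end
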